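(* There is a constant $C>0$ such that the following holds. Let $\epsilon\in(0,1)$, $\ell,q\ge0$ integers, and $\mathcal B=(\mathcal L,\mathcal Q)$ a quadratic factor on $G=\mathbb{F}_p^n$ of complexity $(\ell,q)$ and rank at least $C(\ell+q+\log_p(\epsilon^{-1}))$. Fix $e\in\mathbb{F}_p^\ell\times\mathbb{F}_p^q$ and $d\in(\mathbb{F}_p^\ell\times\mathbb{F}_p^q)^3\times(\mathbb{F}_p^q)^3$ with $\Sigma(d)=e$, and put $B=B(e)$. Then for all $(w,h_a,h_b,h_c)\in\Omega_B$, $$|\Psi^{-1}(w,h_a,h_b,h_c)\cap K_{2,2,2}(d)|\le(1+\epsilon)p^{2n-2\ell-3q}.$$ Moreover, if the family $\mathcal L\cup\{Mw,Mh_a,Mh_b,Mh_c:M\in\mathcal Q\}$ is linearly independent, then $$|\Psi^{-1}(w,h_a,h_b,h_c)\cap K_{2,2,2}(d)|=(1\pm\epsilon)p^{2n-2\ell-11q}.$$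
   Context: $p$ is an odd prime. Quadratic factors: For $\ell\ge1$, a linear factor of complexity $\ell$ on $\mathbb{F}_p^n$ is a linearly independent set $\mathcal{L}=\{r_1,\dots,r_\ell\}\subseteq\mathbb{F}_p^n$ (with a fixed enumeration); the linear factor of complexity $0$ is $\emptyset$. Put $\beta_{\mathcal L}(x)=(x\cdot r_1,\dots,x\cdot r_\ell)\in\mathbb{F}_p^\ell$ (the zero map to $\mathbb{F}_p^0$ if $\ell=0$). For $q\ge 1$, a purely quadratic factor of complexity $q$ is a set $\mathcal{Q}=\{M_1,\dots,M_q\}$ of pairwise distinct symmetric $n\times n$ matrices over $\mathbb{F}_p$ (the empty set if $q=0$); put $\beta_{\mathcal Q}(x,y)=(x^TM_1y,\dots,x^TM_qy)\in\mathbb{F}_p^q$. The rank of $\mathcal Q$ is $n$ if $q=0$, and otherwise the minimum of $\mathrm{rk}(\lambda_1M_1+\dots+\lambda_qM_q)$ over $(\lambda_1,\dots,\lambda_q)\neq 0$. A quadratic factor of complexity $(\ell,q)$ is a pair $\mathcal{B}=(\mathcal L,\mathcal Q)$ of these; its rank is the rank of $\mathcal Q$; $\beta_{\mathcal B}(x)=(\beta_{\mathcal L}(x),\beta_{\mathcal Q}(x,x))$; its atoms are the sets $B(a,b)=\beta_{\mathcal B}^{-1}(a,b)$. For $d=(d_a,d_b,d_c,d_{ab},d_{ac},d_{bc})$, $\Sigma(d)=d_a+d_b+d_c+2(0,d_{ab})+2(0,d_{ac})+2(0,d_{bc})$, where $(0,u)$ prepends $\ell$ zeros. $\Omega_B=\{(x,h_1,h_2,h_3)\in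 G^4: x+\omega_1h_1+\omega_2h_2+\omega_3h_3\in B\text{ for all }\omega\in\{0,1\}^3\}$. $\Psi:G^6\to G^4$, $\Psi(x_1,x_2,y_1,y_2,z_1,z_2)=(x_1+y_1+z_1,x_2-x_1,y_2-y_1,z_2-z_1)$. $K_{2,2,2}(d)$ is the set of $(x_1,x_2,y_1,y_2,z_1,z_2)\in G^6$ such that $\beta_{\mathcal B}(x_i)=d_a$, $\beta_{\mathcal B}(y_i)=d_b$, $\beta_{\mathcal B}(z_i)=d_c$ for $i\in[2]$, and $\beta_{\mathcal Q}(x_i,y_j)=d_{ab}$, $\beta_{\mathcal Q}(x_i,z_j)=d_{ac}$, $\beta_{\mathcal Q}(y_i,z_j)=d_{bc}$ for all $(i,j)\in[2]^2$. "Linearly independent" refers to the family (list) of vectors. *)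

theory Defs
  imports Complex_Main "HOL-Computational_Algebra.Primes"
begin

text \<open>Explicit model of F_p and F_p^n, so that the constant C can be quantified
 before p and n.\<close>

definition Fp :: "nat \<Rightarrow> int set" where
  "Fp p = {0..<int p}"

definition vecs :: "nat \<Rightarrow> nat \<Rightarrow> (nat \<Rightarrow> int) set" where
  "vecs p n = {x. (\<forall>i<n. x i \<in> Fp p) \<and> (\<forall>i\<ge>n. x i = 0)}"

definition is_mat :: "nat \<Rightarrow> nat \<Rightarrow> (nat \<Rightarrow> nat \<Rightarrow> int) \<Rightarrow> bool" where
  "is_mat p n M \<longleftrightarrow> (\<forall>i j. (i < n \<and> j < n \<longrightarrow> M i j \<in> Fp p) \<and> (\<not>(i < n \<and> j < n) \<longrightarrow> M i j = 0))"

definition is_sym :: "(nat \<Rightarrow> nat \<Rightarrow> int) \<Rightarrow> bool" where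
  "is_sym M \<longleftrightarrow> (\<forall>i j. M i j = M j i)"

definition vzero :: "nat \<Rightarrow> int" where
  "vzero = (\<lambda>i. 0)"

definition vadd :: "nat \<Rightarrow> (nat \<Rightarrow> int) \<Rightarrow> (nat \<Rightarrow> int) \<Rightarrow> (nat \<Rightarrow> int)" where
  "vadd p x y = (\<lambda>i. (x i + y i) mod int p)"

definition vsub :: "nat \<Rightarrow> (nat \<Rightarrow> int) \<Rightarrow> (nat \<Rightarrow> int) \<Rightarrow> (nat \<Rightarrow> int)" where
  "vsub p x y = (\<lambda>i. (x i - y i) mod int p)"

definition dotp :: "nat \<Rightarrow> nat \<Rightarrow> (nat \<Rightarrow> int) \<Rightarrow> (nat \<Rightarrow> int) \<Rightarrow> int" where
  "dotp p n x r = (\<Sum>i<n. x i * r i) mod int p"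

definition bil :: "nat \<Rightarrow> nat \<Rightarrow> (nat \<Rightarrow> nat \<Rightarrow> int) \<Rightarrow> (nat \<Rightarrow> int) \<Rightarrow> (nat \<Rightarrow> int) \<Rightarrow> int" where
  "bil p n M x y = (\<Sum>i<n. \<Sum>j<n. x i * M i j * y j) mod int p"

definition mvec :: "nat \<Rightarrow> nat \<Rightarrow> (nat \<Rightarrow> nat \<Rightarrow> int) \<Rightarrow> (nat \<Rightarrow> int) \<Rightarrow> (nat \<Rightarrow> int)" where
  "mvec p n M w = (\<lambda>i. if i < n then (\<Sum>j<n. M i j * w j) mod int p else 0)"

definition lin_indep :: "nat \<Rightarrow> nat \<Rightarrow> (nat \<Rightarrow> int) list \<Rightarrow> bool" where
  "lin_indep p n vs \<longleftrightarrow>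
     (\<forall>c :: nat \<Rightarrow> int. (\<forall>k<length vs. c k \<in> Fp p) \<and>
        (\<forall>i<n. (\<Sum>k<length vs. c k * (vs ! k) i) mod int p = 0)
        \<longrightarrow> (\<forall>k<length vs. c k = 0))"

definition mrow :: "nat \<Rightarrow> nat \<Rightarrow> (nat \<Rightarrow> nat \<Rightarrow> int) \<Rightarrow> nat \<Rightarrow> (nat \<Rightarrow> int)" where
  "mrow p n M i = (\<lambda>j. if j < n then M i j mod int p else 0)"

definition mrank :: "nat \<Rightarrow> nat \<Rightarrow> (nat \<Rightarrow> nat \<Rightarrow> int) \<Rightarrow> nat" where
  "mrank p n M = Max {k. \<exists>is. length is = k \<and> (\<forall>i\<in>set is. i < n) \<and>
                              lin_indep p n (map (mrow p n M) is)}"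

definition mlincomb :: "nat \<Rightarrow> nat \<Rightarrow> (nat \<Rightarrow> int) \<Rightarrow> (nat \<Rightarrow> nat \<Rightarrow> int) list \<Rightarrow> (nat \<Rightarrow> nat \<Rightarrow> int)" where
  "mlincomb p n lam Ms = (\<lambda>i j. if i < n \<and> j < n then (\<Sum>k<length Ms. lam k * (Ms ! k) i j) mod int p else 0)"

definition qrank :: "nat \<Rightarrow> nat \<Rightarrow> (nat \<Rightarrow> nat \<Rightarrow> int) list \<Rightarrow> nat" where
  "qrank p n Ms = (if Ms = [] then n else
     Min {mrank p n (mlincomb p n lam Ms) | lam.
            (\<forall>k<length Ms. lam k \<in> Fp p) \<and> (\<forall>k\<ge>length Ms. lam k = 0) \<and> (\<exists>k<length Ms. lam k \<noteq> 0)})"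

definition linear_factor :: "nat \<Rightarrow> nat \<Rightarrow> (nat \<Rightarrow> int) list \<Rightarrow> bool" where
  "linear_factor p n Ls \<longleftrightarrow> set Ls \<subseteq> vecs p n \<and> lin_indep p n Ls"

definition quad_factor :: "nat \<Rightarrow> nat \<Rightarrow> (nat \<Rightarrow> nat \<Rightarrow> int) list \<Rightarrow> bool" where
  "quad_factor p n Ms \<longleftrightarrow> distinct Ms \<and> (\<forall>M\<in>set Ms. is_mat p n M \<and> is_sym M)"

definition betaL :: "nat \<Rightarrow> nat \<Rightarrow> (nat \<Rightarrow> int) list \<Rightarrow> (nat \<Rightarrow> int) \<Rightarrow> int list" where
  "betaL p n Ls x = map (\<lambda>r. dotp p n x r) Ls"

definition betaQ :: "nat \<Rightarrow> nat \<Rightarrow> (nat \<Rightarrow> nat \<Rightarrow> int) list \<Rightarrow> (nat \<Rightarrow> int) \<Rightarrow> (nat \<Rightarrow> int) \<Rightarrow> int list" where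
  "betaQ p n Ms x y = map (\<lambda>M. bil p n M x y) Ms"

definition betaB :: "nat \<Rightarrow> nat \<Rightarrow> (nat \<Rightarrow> int) list \<Rightarrow> (nat \<Rightarrow> nat \<Rightarrow> int) list \<Rightarrow> (nat \<Rightarrow> int) \<Rightarrow> int list \<times> int list" where
  "betaB p n Ls Ms x = (betaL p n Ls x, betaQ p n Ms x x)"

definition fvec :: "nat \<Rightarrow> nat \<Rightarrow> int list \<Rightarrow> bool" where
  "fvec p m u \<longleftrightarrow> length u = m \<and> set u \<subseteq> Fp p"

definition ladd :: "nat \<Rightarrow> int list \<Rightarrow> int list \<Rightarrow> int list" where
  "ladd p u v = map2 (\<lambda>a b. (a + b) mod int p) u v"

definition padd :: "nat \<Rightarrow> int list \<times> int list \<Rightarrow> int list \<times> int list \<Rightarrow> int list \<times> int list" where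
  "padd p a b = (ladd p (fst a) (fst b), ladd p (snd a) (snd b))"

definition twozero :: "nat \<Rightarrow> nat \<Rightarrow> int list \<Rightarrow> int list \<times> int list" where
  "twozero p l u = (replicate l 0, map (\<lambda>a. (2 * a) mod int p) u)"

definition Sigma_d :: "nat \<Rightarrow> nat \<Rightarrow>
   (int list \<times> int list) \<times> (int list \<times> int list) \<times> (int list \<times> int list) \<times> int list \<times> int list \<times> int list
   \<Rightarrow> int list \<times> int list" where
  "Sigma_d p l d = (case d of (da, db, dc, dab, dac, dbc) \<Rightarrow>
     padd p (padd p (padd p (padd p (padd p da db) dc) (twozero p l dab)) (twozero p l dac)) (twozero p l dbc))"

definition atom :: "nat \<Rightarrow> nat \<Rightarrow> (nat \<Rightarrow> int) list \<Rightarrow> (nat \<Rightarrow> nat \<Rightarrow> int) list \<Rightarrow> int list \<times> int list \<Rightarrow> (nat \<Rightarrow> int) set" where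
  "atom p n Ls Ms e = {x \<in> vecs p n. betaB p n Ls Ms x = e}"

definition sel :: "bool \<Rightarrow> (nat \<Rightarrow> int) \<Rightarrow> (nat \<Rightarrow> int)" where
  "sel b h = (if b then h else vzero)"

definition Omega :: "nat \<Rightarrow> nat \<Rightarrow> (nat \<Rightarrow> int) set \<Rightarrow>
     ((nat \<Rightarrow> int) \<times> (nat \<Rightarrow> int) \<times> (nat \<Rightarrow> int) \<times> (nat \<Rightarrow> int)) set" where
  "Omega p n B = {(x, h1, h2, h3). x \<in> vecs p n \<and> h1 \<in> vecs p n \<and> h2 \<in> vecs p n \<and> h3 \<in> vecs p n \<and>
      (\<forall>w1 w2 w3. vadd p (vadd p (vadd p x (sel w1 h1)) (sel w2 h2)) (sel w3 h3) \<in> B)}"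

type_synonym vec6 = "(nat \<Rightarrow> int) \<times> (nat \<Rightarrow> int) \<times> (nat \<Rightarrow> int) \<times> (nat \<Rightarrow> int) \<times> (nat \<Rightarrow> int) \<times> (nat \<Rightarrow> int)"

definition Psi :: "nat \<Rightarrow> vec6 \<Rightarrow> (nat \<Rightarrow> int) \<times> (nat \<Rightarrow> int) \<times> (nat \<Rightarrow> int) \<times> (nat \<Rightarrow> int)" where
  "Psi p t = (case t of (x1, x2, y1, y2, z1, z2) \<Rightarrow>
     (vadd p (vadd p x1 y1) z1, vsub p x2 x1, vsub p y2 y1, vsub p z2 z1))"

definition K222 :: "nat \<Rightarrow> nat \<Rightarrow> (nat \<Rightarrow> int) list \<Rightarrow> (nat \<Rightarrow> nat \<Rightarrow> int) list \<Rightarrow>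
   (int list \<times> int list) \<times> (int list \<times> int list) \<times> (int list \<times> int list) \<times> int list \<times> int list \<times> int list
   \<Rightarrow> vec6 set" where
  "K222 p n Ls Ms d = (case d of (da, db, dc, dab, dac, dbc) \<Rightarrow>
     {(x1, x2, y1, y2, z1, z2). x1 \<in> vecs p n \<and> x2 \<in> vecs p n \<and> y1 \<in> vecs p n \<and>
        y2 \<in> vecs p n \<and> z1 \<in> vecs p n \<and> z2 \<in> vecs p n \<and>
        (\<forall>x\<in>{x1, x2}. betaB p n Ls Ms x = da) \<and>
        (\<forall>y\<in>{y1, y2}. betaB p n Ls Ms y = db) \<and>
        (\<forall>z\<in>{z1, z2}. betaB p n Ls Ms z = dc) \<and>
        (\<forall>x\<in>{x1, x2}. \<forall>y\<in>{y1, y2}. betaQ p n Ms x y = dab) \<and>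
        (\<forall>x\<in>{x1, x2}. \<forall>z\<in>{z1, z2}. betaQ p n Ms x z = dac) \<and>
        (\<forall>y\<in>{y1, y2}. \<forall>z\<in>{z1, z2}. betaQ p n Ms y z = dbc)})"

end

theory Submission
  imports Defs
begin


definition ee :: "nat \<Rightarrow> int \<Rightarrow> complex" where
  "ee p t = cis (2 * pi * of_int t / of_nat p)"

lemma ee_add: "ee p (a + b) = ee p a * ee p b"
  unfolding ee_def by (simp add: cis_mult add_divide_distrib distrib_left)

lemma ee_zero[simp]: "ee p 0 = 1"
  unfolding ee_def by simp

lemma norm_ee[simp]: "norm (ee p t) = 1"
  unfolding ee_def by simp

lemma ee_neg: "ee p (- a) = cnj (ee p a)"
  unfolding ee_def by (simp add: cis_cnj)

lemma ee_multiple: assumes "p > 0" shows "ee p (int p * k) = 1"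
proof -
  have "2 * pi * of_int (int p * k) / of_nat p = 2 * pi * of_int k"
    using assms by (simp add: field_simps)
  thus ?thesis unfolding ee_def by simp
qed

lemma ee_cong: assumes "p > 0" "a mod int p = b mod int p" shows "ee p a = ee p b"
proof -
  obtain k where k: "a = b + int p * k"
    using assms(2) by (metis mod_eqE)
  show ?thesis unfolding k ee_add using ee_multiple[OF assms(1)] by simp
qed

lemma ee_mod: "p > 0 \<Longrightarrow> ee p (a mod int p) = ee p a"
  by (rule ee_cong) auto

lemma ee_diff: "ee p (a - b) = ee p a * cnj (ee p b)"
  using ee_add[of p a "-b"] ee_neg[of p b] by simp

lemma ee_sum: "ee p (\<Sum>i\<in>A. f i) = (\<Prod>i\<in>A. ee p (f i))"
  by (induction A rule: infinite_finite_induct) (auto simp: ee_add)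

lemma ee_neq1: assumes "p > 0" "\<not> int p dvd c" shows "ee p c \<noteq> 1"
proof
  assume "ee p c = 1"
  hence "Re (cis (2 * pi * of_int c / of_nat p)) = 1"
    unfolding ee_def by simp
  hence "cos (2 * pi * of_int c / of_nat p) = 1" by simp
  then obtain m :: int where m: "2 * pi * of_int c / of_nat p = of_int m * 2 * pi"
    using cos_one_2pi_int by blast
  hence "of_int c = (of_int (m * int p) :: real)"
    using assms(1) by (simp add: field_simps)
  hence "c = m * int p" by linarith
  thus False using assms(2) by simp
qed

lemma ee_pow: "ee p c ^ k = ee p (int k * c)"
  unfolding ee_def by (simp add: DeMoivre mult.assoc mult.left_commute)

lemma sum_Fp_ee:
  assumes "p > 0"
  shows "(\<Sum>a\<in>Fp p. ee p (a * c)) = (if int p dvd c then of_nat p else 0)"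
proof -
  have "(\<Sum>a\<in>Fp p. ee p (a * c)) = (\<Sum>k\<in>{0..<p}. ee p (int k * c))"
  proof -
    have "Fp p = int ` {0..<p}" unfolding Fp_def by (simp add: image_int_atLeastLessThan)
    thus ?thesis by (simp add: sum.reindex)
  qed
  also have "\<dots> = (\<Sum>k<p. ee p c ^ k)"
    by (simp add: ee_pow lessThan_atLeast0)
  finally have S: "(\<Sum>a\<in>Fp p. ee p (a * c)) = (\<Sum>k<p. ee p c ^ k)" .
  show ?thesis
  proof (cases "int p dvd c")
    case True
    then obtain m where "c = int p * m" by blast
    hence "ee p c = 1" using ee_multiple[OF assms] by simp
    thus ?thesis using S True by simp
  next
    case False
    have "ee p c ^ p = 1" using ee_pow[of p c p] ee_multiple[OF assms, of c] by simp
    thus ?thesis using S False geometric_sum[OF ee_neq1[OF assms False], of p] by simp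
  qed
qed


lemma vecs_0: "vecs p 0 = {vzero}"
  unfolding vecs_def vzero_def by auto

lemma vecs_Suc: "vecs p (Suc m) = (\<lambda>(c,a). c(m:=a)) ` (vecs p m \<times> Fp p)"
proof (rule set_eqI, rule iffI)
  fix x assume x: "x \<in> vecs p (Suc m)"
  have "x = (\<lambda>(c,a). c(m:=a)) (x(m:=0), x m)" by simp
  moreover have "(x(m:=0), x m) \<in> vecs p m \<times> Fp p"
    using x unfolding vecs_def by auto
  ultimately show "x \<in> (\<lambda>(c,a). c(m:=a)) ` (vecs p m \<times> Fp p)" by blast
next
  fix x assume "x \<in> (\<lambda>(c,a). c(m:=a)) ` (vecs p m \<times> Fp p)"
  thus "x \<in> vecs p (Suc m)" unfolding vecs_def by (auto simp: less_Suc_eq)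
qed

lemma vecs_Suc_inj: "inj_on (\<lambda>(c,a). c(m:=a)) (vecs p m \<times> Fp p)"
proof (rule inj_onI, clarify)
  fix c a c' a' assume c: "c \<in> vecs p m" "c' \<in> vecs p m" and eq: "c(m := a) = c'(m := a')"
  have "a = a'" using fun_cong[OF eq, of m] by simp
  moreover have "c = c'"
  proof
    fix i show "c i = c' i"
      using fun_cong[OF eq, of i] c unfolding vecs_def by (cases "i = m") auto
  qed
  ultimately show "c = c' \<and> a = a'" by simp
qed

lemma finite_Fp[simp]: "finite (Fp p)" unfolding Fp_def by simp

lemma finite_vecs[simp]: "finite (vecs p n)"
  by (induction n) (auto simp: vecs_0 vecs_Suc)

lemma vzero_vecs[simp]: "p > 0 \<Longrightarrow> vzero \<in> vecs p n"
  unfolding vecs_def vzero_def Fp_def by auto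

lemma sum_prod_vecs:
  fixes f :: "nat \<Rightarrow> int \<Rightarrow> 'b::comm_semiring_1"
  shows "(\<Sum>c\<in>vecs p m. \<Prod>j<m. f j (c j)) = (\<Prod>j<m. \<Sum>a\<in>Fp p. f j a)"
proof (induction m)
  case 0
  then show ?case by (simp add: vecs_0)
next
  case (Suc m)
  have "(\<Sum>c\<in>vecs p (Suc m). \<Prod>j<Suc m. f j (c j))
      = (\<Sum>(c,a)\<in>vecs p m \<times> Fp p. \<Prod>j<Suc m. f j ((c(m:=a)) j))"
    unfolding vecs_Suc by (subst sum.reindex[OF vecs_Suc_inj]) (simp add: case_prod_unfold)
  also have "\<dots> = (\<Sum>(c,a)\<in>vecs p m \<times> Fp p. (\<Prod>j<m. f j (c j)) * f m a)"
  proof (rule sum.cong[OF refl], clarify)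
    fix c a
    have "(\<Prod>j<m. f j ((c(m:=a)) j)) = (\<Prod>j<m. f j (c j))"
      by (rule prod.cong) auto
    thus "(\<Prod>j<Suc m. f j ((c(m:=a)) j)) = (\<Prod>j<m. f j (c j)) * f m a" by simp
  qed
  also have "\<dots> = (\<Sum>c\<in>vecs p m. \<Prod>j<m. f j (c j)) * (\<Sum>a\<in>Fp p. f m a)"
    by (simp add: sum_product sum.cartesian_product)
  finally show ?case using Suc by simp
qed

lemma card_vecs: "card (vecs p n) = p ^ n"
proof -
  have "(\<Sum>c\<in>vecs p n. \<Prod>j<n. (\<lambda>j a. (1::nat)) j (c j)) = (\<Prod>j<n. \<Sum>a\<in>Fp p. (1::nat))"
    by (rule sum_prod_vecs)
  thus ?thesis by (simp add: Fp_def)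
qed

lemma prod_if_dvd:
  "(\<Prod>i<n. (if P i then (c::'b::comm_semiring_1) else 0)) = (if \<forall>i<n. P i then c ^ n else 0)"
  by (induction n) (auto simp: less_Suc_eq mult.commute)

lemma sum_vecs_ee:
  assumes "p > 0"
  shows "(\<Sum>x\<in>vecs p n. ee p (\<Sum>i<n. x i * c i)) = (if \<forall>i<n. int p dvd c i then of_nat p ^ n else 0)"
proof -
  have "(\<Sum>x\<in>vecs p n. ee p (\<Sum>i<n. x i * c i)) = (\<Sum>x\<in>vecs p n. \<Prod>i<n. (\<lambda>i a. ee p (a * c i)) i (x i))"
    by (simp add: ee_sum)
  also have "\<dots> = (\<Prod>i<n. \<Sum>a\<in>Fp p. ee p (a * c i))"
    by (rule sum_prod_vecs)
  also have "\<dots> = (\<Prod>i<n. if int p dvd c i then of_nat p else 0)"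
    using sum_Fp_ee[OF assms] by simp
  finally show ?thesis by (simp add: prod_if_dvd)
qed

lemma indicator_vecs:
  assumes "p > 0"
  shows "(if \<forall>j<m. int p dvd P j then 1 else 0 :: complex)
       = (\<Sum>c\<in>vecs p m. ee p (\<Sum>j<m. c j * P j)) / of_nat p ^ m"
  using sum_vecs_ee[OF assms, where n=m and c=P] assms by simp

lemma card_indicator:
  assumes "finite A"
  shows "of_nat (card {x\<in>A. Q x}) = (\<Sum>x\<in>A. if Q x then 1 else 0 :: 'b::comm_semiring_1)"
  by (subst sum.inter_filter[OF assms, symmetric]) simp

lemma lin_indep_zero:
  assumes "lin_indep p n vs" "c \<in> vecs p (length vs)"
    and "\<forall>i<n. int p dvd (\<Sum>j<length vs. c j * (vs ! j) i)"
  shows "c = vzero"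
proof
  fix j
  have "\<forall>k<length vs. c k = 0"
    using assms unfolding lin_indep_def vecs_def by auto
  thus "c j = vzero j" using assms(2) unfolding vecs_def vzero_def by (cases "j < length vs") auto
qed

lemma swap_lin:
  fixes c b x :: "nat \<Rightarrow> int" and v :: "nat \<Rightarrow> nat \<Rightarrow> int"
  shows "(\<Sum>j<k. c j * ((\<Sum>i<n. v j i * x i) + b j)) = (\<Sum>j<k. c j * b j) + (\<Sum>i<n. x i * (\<Sum>j<k. c j * v j i))"
proof -
  have "(\<Sum>j<k. \<Sum>i<n. c j * (v j i * x i)) = (\<Sum>i<n. \<Sum>j<k. x i * (c j * v j i))"
    by (subst sum.swap) (simp add: mult_ac)
  thus ?thesis by (simp add: distrib_left sum.distrib sum_distrib_left)
qed

lemma lin_count: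
  assumes "p > 0" "lin_indep p n vs"
  shows "card {x\<in>vecs p n. \<forall>j<length vs. int p dvd (\<Sum>i<n. (vs ! j) i * x i) + b j} * p ^ length vs = p ^ n"
proof -
  let ?k = "length vs"
  let ?P = "\<lambda>x j. (\<Sum>i<n. (vs ! j) i * x i) + b j"
  have "(of_nat (card {x\<in>vecs p n. \<forall>j<?k. int p dvd ?P x j}) :: complex)
        = (\<Sum>x\<in>vecs p n. if \<forall>j<?k. int p dvd ?P x j then 1 else 0)"
    by (rule card_indicator) simp
  also have "\<dots> = (\<Sum>x\<in>vecs p n. (\<Sum>c\<in>vecs p ?k. ee p (\<Sum>j<?k. c j * ?P x j)) / of_nat p ^ ?k)"
    by (rule sum.cong[OF refl], rule indicator_vecs[OF assms(1)])
  also have "\<dots> = (\<Sum>c\<in>vecs p ?k. \<Sum>x\<in>vecs p n. ee p (\<Sum>j<?k. c j * ?P x j)) / of_nat p ^ ?k"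
    by (subst sum.swap) (simp add: sum_divide_distrib)
  also have "\<dots> = (\<Sum>c\<in>vecs p ?k. ee p (\<Sum>j<?k. c j * b j) *
          (\<Sum>x\<in>vecs p n. ee p (\<Sum>i<n. x i * (\<Sum>j<?k. c j * (vs ! j) i))))  / of_nat p ^ ?k"
  proof -
    have "\<And>c x. (\<Sum>j<?k. c j * ?P x j) = (\<Sum>j<?k. c j * b j) + (\<Sum>i<n. x i * (\<Sum>j<?k. c j * (vs ! j) i))"
      by (rule swap_lin)
    thus ?thesis by (simp add: ee_add sum_distrib_left)
  qed
  also have "\<dots> = (\<Sum>c\<in>vecs p ?k. if c = vzero then of_nat p ^ n else 0) / of_nat p ^ ?k"
  proof -
    have "\<And>c. c \<in> vecs p ?k \<Longrightarrow> ee p (\<Sum>j<?k. c j * b j) *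
          (\<Sum>x\<in>vecs p n. ee p (\<Sum>i<n. x i * (\<Sum>j<?k. c j * (vs ! j) i))) = (if c = vzero then of_nat p ^ n else 0)"
    proof -
      fix c assume c: "c \<in> vecs p ?k"
      show "?thesis c"
      proof (cases "c = vzero")
        case True
        thus ?thesis by (simp add: sum_vecs_ee[OF assms(1)] vzero_def card_vecs)
      next
        case False
        hence "\<not> (\<forall>i<n. int p dvd (\<Sum>j<?k. c j * (vs ! j) i))"
          using lin_indep_zero[OF assms(2) c] by blast
        thus ?thesis using False by (simp only: sum_vecs_ee[OF assms(1)] if_False) simp
      qed
    qed
    thus ?thesis by simp
  qed
  also have "\<dots> = of_nat p ^ n / of_nat p ^ ?k"
    using assms(1) by (simp add: sum.delta)
  finally have "(of_nat (card {x\<in>vecs p n. \<forall>j<?k. int p dvd ?P x j}) :: complex) * of_nat p ^ ?k = of_nat p ^ n"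
    using assms(1) by simp
  thus ?thesis by (metis (no_types, lifting) of_nat_eq_iff of_nat_mult of_nat_power)
qed


lemma sum_mod_cong:
  fixes f g :: "'a \<Rightarrow> int"
  assumes "\<And>i. i \<in> A \<Longrightarrow> f i mod m = g i mod m"
  shows "sum f A mod m = sum g A mod m"
proof -
  have "sum f A mod m = (\<Sum>i\<in>A. f i mod m) mod m" by (simp add: mod_sum_eq)
  also have "\<dots> = (\<Sum>i\<in>A. g i mod m) mod m" using assms by simp
  also have "\<dots> = sum g A mod m" by (simp add: mod_sum_eq)
  finally show ?thesis .
qed

lemma dvd_iff_mod_eq: "(m::int) dvd a \<longleftrightarrow> a mod m = 0" by auto

lemma dvd_cong: "(a::int) mod m = b mod m \<Longrightarrow> m dvd a \<longleftrightarrow> m dvd b"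
  by (metis dvd_eq_mod_eq_0)

lemma lin_indep_len:
  assumes "p \<ge> 2" "lin_indep p n vs"
  shows "length vs \<le> n"
proof -
  let ?S = "{x\<in>vecs p n. \<forall>j<length vs. int p dvd (\<Sum>i<n. (vs ! j) i * x i) + 0}"
  have eq: "card ?S * p ^ length vs = p ^ n"
    using lin_count[OF _ assms(2), of "\<lambda>_. 0"] assms(1) by simp
  have "vzero \<in> vecs p n" using assms(1) by simp
  hence "vzero \<in> ?S" by (simp add: vzero_def)
  hence "?S \<noteq> {}" by blast
  moreover have "finite ?S" by simp
  ultimately have "card ?S \<ge> 1" by (simp add: Suc_le_eq card_gt_0_iff)
  hence "1 * p ^ length vs \<le> card ?S * p ^ length vs" by (intro mult_le_mono1)
  hence "p ^ length vs \<le> p ^ n" by (simp only: eq mult_1)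
  thus ?thesis using assms(1) by (simp add: power_increasing_iff)
qed

lemma mrank_obtain:
  assumes "p \<ge> 2"
  shows "\<exists>is. length is = mrank p n M \<and> (\<forall>i\<in>set is. i < n) \<and> lin_indep p n (map (mrow p n M) is)"
proof -
  let ?K = "{k. \<exists>is. length is = k \<and> (\<forall>i\<in>set is. i < n) \<and> lin_indep p n (map (mrow p n M) is)}"
  have sub: "?K \<subseteq> {..n}" proof
    fix k assume "k \<in> ?K"
    then obtain ix where "length ix = k" "lin_indep p n (map (mrow p n M) ix)" by blast
    thus "k \<in> {..n}" using lin_indep_len[OF assms] by fastforce
  qed
  hence fin: "finite ?K" by (rule finite_subset) simp
  have "lin_indep p n (map (mrow p n M) [])" by (simp add: lin_indep_def)
  hence "0 \<in> ?K" by force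
  hence "Max ?K \<in> ?K" using Max_in[OF fin] by blast
  thus ?thesis unfolding mrank_def by blast
qed

lemma mrank_le: "p \<ge> 2 \<Longrightarrow> mrank p n M \<le> n"
proof -
  assume p: "p \<ge> 2"
  obtain ix where "length ix = mrank p n M" "lin_indep p n (map (mrow p n M) ix)"
    using mrank_obtain[OF p] by blast
  thus ?thesis using lin_indep_len[OF p] by fastforce
qed

lemma kernel_bound:
  assumes "p \<ge> 2"
  shows "card {g\<in>vecs p n. \<forall>i<n. int p dvd (\<Sum>j<n. M i j * g j) + v i} \<le> p ^ (n - mrank p n M)"
proof -
  obtain ix where ix: "length ix = mrank p n M" "\<forall>i\<in>set ix. i < n"
      "lin_indep p n (map (mrow p n M) ix)"
    using mrank_obtain[OF assms] by blast
  let ?vs = "map (mrow p n M) ix"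
  let ?T = "{g\<in>vecs p n. \<forall>j<length ?vs. int p dvd (\<Sum>i<n. (?vs ! j) i * g i) + v (ix ! j)}"
  have eq: "card ?T * p ^ length ?vs = p ^ n"
    using lin_count[OF _ ix(3)] assms by simp
  have le: "length ?vs \<le> n" using lin_indep_len[OF assms ix(3)] .
  have cardT: "card ?T = p ^ (n - mrank p n M)"
  proof -
    have "card ?T * p ^ length ?vs = p ^ (n - length ?vs) * p ^ length ?vs"
      using eq le by (simp add: power_add[symmetric])
    thus ?thesis using assms ix(1) by simp
  qed
  have "{g\<in>vecs p n. \<forall>i<n. int p dvd (\<Sum>j<n. M i j * g j) + v i} \<subseteq> ?T"
  proof
    fix g assume "g \<in> {g\<in>vecs p n. \<forall>i<n. int p dvd (\<Sum>j<n. M i j * g j) + v i}"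
    hence g: "g \<in> vecs p n" "\<forall>i<n. int p dvd (\<Sum>j<n. M i j * g j) + v i" by auto
    have "\<forall>j<length ?vs. int p dvd (\<Sum>i<n. (?vs ! j) i * g i) + v (ix ! j)"
    proof (intro allI impI)
      fix j assume j: "j < length ?vs"
      hence r: "ix ! j < n" using ix(2) by simp
      have "((\<Sum>i<n. (?vs ! j) i * g i) + v (ix ! j)) mod int p
            = ((\<Sum>i<n. M (ix ! j) i * g i) + v (ix ! j)) mod int p"
      proof -
        have "(\<Sum>i<n. (?vs ! j) i * g i) mod int p = (\<Sum>i<n. M (ix ! j) i * g i) mod int p"
          using j by (intro sum_mod_cong) (simp add: mrow_def mod_mult_left_eq)
        thus ?thesis by (metis mod_add_left_eq)
      qed
      thus "int p dvd (\<Sum>i<n. (?vs ! j) i * g i) + v (ix ! j)"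
        using g(2) r dvd_cong by blast
    qed
    thus "g \<in> ?T" using g(1) by blast
  qed
  hence "card {g\<in>vecs p n. \<forall>i<n. int p dvd (\<Sum>j<n. M i j * g j) + v i} \<le> card ?T"
    by (intro card_mono) auto
  thus ?thesis using cardT by simp
qed


definition qf :: "nat \<Rightarrow> (nat \<Rightarrow> nat \<Rightarrow> int) \<Rightarrow> (nat \<Rightarrow> int) \<Rightarrow> (nat \<Rightarrow> int) \<Rightarrow> int" where
  "qf n A x y = (\<Sum>i<n. \<Sum>j<n. x i * A i j * y j)"

definition lf :: "nat \<Rightarrow> (nat \<Rightarrow> int) \<Rightarrow> (nat \<Rightarrow> int) \<Rightarrow> int" where
  "lf n u x = (\<Sum>i<n. u i * x i)"

definition symm :: "(nat \<Rightarrow> nat \<Rightarrow> int) \<Rightarrow> bool" where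
  "symm A \<longleftrightarrow> (\<forall>i j. A i j = A j i)"

lemma qf_addL: "qf n A (\<lambda>i. x i + h i) y = qf n A x y + qf n A h y"
  unfolding qf_def by (simp add: distrib_right sum.distrib)

lemma qf_addR: "qf n A x (\<lambda>i. y i + h i) = qf n A x y + qf n A x h"
  unfolding qf_def by (simp add: distrib_left sum.distrib)

lemma qf_lfL: "qf n A x y = lf n (\<lambda>i. \<Sum>j<n. A i j * y j) x"
  unfolding qf_def lf_def by (simp add: sum_distrib_left sum_distrib_right mult_ac)

lemma qf_lfR: "qf n A x y = lf n (\<lambda>j. \<Sum>i<n. x i * A i j) y"
proof -
  have "qf n A x y = (\<Sum>j<n. \<Sum>i<n. x i * A i j * y j)"
    unfolding qf_def by (rule sum.swap)
  thus ?thesis unfolding lf_def by (simp add: sum_distrib_left sum_distrib_right mult_ac)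
qed

lemma qf_sym: "symm A \<Longrightarrow> qf n A x y = qf n A y x"
proof -
  assume "symm A"
  have "qf n A x y = (\<Sum>j<n. \<Sum>i<n. x i * A i j * y j)"
    unfolding qf_def by (rule sum.swap)
  also have "\<dots> = qf n A y x" unfolding qf_def using \<open>symm A\<close> unfolding symm_def
    by (simp add: mult_ac)
  finally show ?thesis .
qed

lemma lf_add_coef: "lf n (\<lambda>i. a i + b i) x = lf n a x + lf n b x"
  unfolding lf_def by (simp add: distrib_right sum.distrib)

lemma lf_addV: "lf n u (\<lambda>i. x i + h i) = lf n u x + lf n u h"
  unfolding lf_def by (simp add: distrib_left sum.distrib)

lemma lf_cmult: "lf n (\<lambda>i. 2 * a i) x = 2 * lf n a x"
  unfolding lf_def by (simp add: sum_distrib_left mult_ac)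

lemma qf_cong:
  assumes "\<forall>i<n. x i mod m = x' i mod m" "\<forall>i<n. y i mod m = y' i mod m"
  shows "qf n A x y mod m = qf n A x' y' mod m"
  unfolding qf_def
proof (intro sum_mod_cong)
  fix i j assume i: "i \<in> {..<n}" and j: "j \<in> {..<n}"
  have "(x i * A i j * y j) mod m = ((x i mod m) * A i j * (y j mod m)) mod m"
    by (metis mod_mult_left_eq mod_mult_right_eq)
  also have "\<dots> = ((x' i mod m) * A i j * (y' j mod m)) mod m" using assms i j by simp
  also have "\<dots> = (x' i * A i j * y' j) mod m"
    by (metis mod_mult_left_eq mod_mult_right_eq)
  finally show "(x i * A i j * y j) mod m = (x' i * A i j * y' j) mod m" .
qed

lemma lf_cong:
  assumes "\<forall>i<n. x i mod m = x' i mod m"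
  shows "lf n u x mod m = lf n u x' mod m"
  unfolding lf_def
proof (intro sum_mod_cong)
  fix i assume i: "i \<in> {..<n}"
  show "(u i * x i) mod m = (u i * x' i) mod m"
    using assms i by (metis lessThan_iff mod_mult_right_eq)
qed

lemma vadd_vecs: "p > 0 \<Longrightarrow> x \<in> vecs p n \<Longrightarrow> h \<in> vecs p n \<Longrightarrow> vadd p x h \<in> vecs p n"
  unfolding vecs_def vadd_def Fp_def by auto

lemma vadd_inj: assumes "p > 0" shows "inj_on (vadd p x) (vecs p n)"
proof (rule inj_onI)
  fix h h' assume h: "h \<in> vecs p n" "h' \<in> vecs p n" and eq: "vadd p x h = vadd p x h'"
  show "h = h'"
  proof
    fix i
    show "h i = h' i"
    proof (cases "i < n")
      case True
      have "(x i + h i) mod int p = (x i + h' i) mod int p"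
        using fun_cong[OF eq, of i] unfolding vadd_def by simp
      hence "(x i + h i - x i) mod int p = (x i + h' i - x i) mod int p"
        by (intro mod_diff_cong) auto
      hence "h i mod int p = h' i mod int p" by simp
      moreover have "h i mod int p = h i" "h' i mod int p = h' i"
        using h True unfolding vecs_def Fp_def by auto
      ultimately show ?thesis by simp
    next
      case False
      thus ?thesis using h unfolding vecs_def by auto
    qed
  qed
qed

lemma vadd_bij: assumes "p > 0" "x \<in> vecs p n" shows "vadd p x ` vecs p n = vecs p n"
  using endo_inj_surj[OF finite_vecs _ vadd_inj[OF assms(1)]] vadd_vecs[OF assms] by blast

lemma vadd_mod: "(vadd p x h) i mod int p = (x i + h i) mod int p"
  unfolding vadd_def by simp

lemma phase_expand:
  fixes n :: nat and A B D :: "nat \<Rightarrow> nat \<Rightarrow> int" and u v x y h g :: "nat \<Rightarrow> int" and \<kappa> :: int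
  assumes "symm A" "symm D"
  defines "\<phi> \<equiv> \<lambda>x y. qf n A x x + qf n D y y + qf n B x y + lf n u x + lf n v y + \<kappa>"
  shows "\<phi> (\<lambda>i. x i + h i) (\<lambda>i. y i + g i) - \<phi> x y =
    (qf n A h h + qf n D g g + qf n B h g + lf n u h + lf n v g)
    + lf n (\<lambda>i. 2 * (\<Sum>j<n. A i j * h j) + (\<Sum>j<n. B i j * g j)) x
    + lf n (\<lambda>i. (\<Sum>j<n. h j * B j i) + 2 * (\<Sum>j<n. D i j * g j)) y"
proof -
  have A1: "qf n A h x = qf n A x h" using qf_sym[OF assms(1)] by simp
  have D1: "qf n D g y = qf n D y g" using qf_sym[OF assms(2)] by simp
  have e1: "lf n (\<lambda>i. 2 * (\<Sum>j<n. A i j * h j) + (\<Sum>j<n. B i j * g j)) x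
        = 2 * qf n A x h + qf n B x g"
    by (simp add: lf_add_coef lf_cmult qf_lfL[of n A x h] qf_lfL[of n B x g])
  have e2: "lf n (\<lambda>i. (\<Sum>j<n. h j * B j i) + 2 * (\<Sum>j<n. D i j * g j)) y
        = qf n B h y + 2 * qf n D y g"
    by (simp add: lf_add_coef lf_cmult qf_lfL[of n D y g] qf_lfR[of n B h y])
  show ?thesis unfolding \<phi>_def e1 e2
    by (simp add: qf_addL qf_addR lf_addV A1 D1 algebra_simps)
qed


lemma sum_vecs_ee_lf:
  assumes "p > 0"
  shows "(\<Sum>x\<in>vecs p n. ee p (lf n c x)) = (if \<forall>i<n. int p dvd c i then of_nat p ^ n else 0)"
  using sum_vecs_ee[OF assms, where n=n and c=c] unfolding lf_def by (simp add: mult.commute)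

lemma phase_cong:
  assumes "\<forall>i<n. x i mod m = x' i mod m" "\<forall>i<n. y i mod m = y' i mod m"
  shows "(qf n A x x + qf n D y y + qf n B x y + lf n u x + lf n v y + \<kappa>) mod m
       = (qf n A x' x' + qf n D y' y' + qf n B x' y' + lf n u x' + lf n v y' + \<kappa>) mod m"
proof -
  have h1: "qf n A x x mod m = qf n A x' x' mod m" by (rule qf_cong) (use assms in auto)
  have h2: "qf n D y y mod m = qf n D y' y' mod m" by (rule qf_cong) (use assms in auto)
  have h3: "qf n B x y mod m = qf n B x' y' mod m" by (rule qf_cong) (use assms in auto)
  have h4: "lf n u x mod m = lf n u x' mod m" by (rule lf_cong) (use assms in auto)
  have h5: "lf n v y mod m = lf n v y' mod m" by (rule lf_cong) (use assms in auto)
  show ?thesis by (intro mod_add_cong h1 h2 h3 h4 h5 refl)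
qed

lemma gauss_bound:
  fixes n :: nat and A B D :: "nat \<Rightarrow> nat \<Rightarrow> int" and u v :: "nat \<Rightarrow> int" and \<kappa> :: int
  assumes p: "p > 0" and sA: "symm A" and sD: "symm D"
  defines "\<phi> \<equiv> \<lambda>x y. qf n A x x + qf n D y y + qf n B x y + lf n u x + lf n v y + \<kappa>"
  defines "K \<equiv> {(h,g) \<in> vecs p n \<times> vecs p n.
      (\<forall>i<n. int p dvd 2 * (\<Sum>j<n. A i j * h j) + (\<Sum>j<n. B i j * g j)) \<and>
      (\<forall>i<n. int p dvd (\<Sum>j<n. h j * B j i) + 2 * (\<Sum>j<n. D i j * g j))}"
  shows "(cmod (\<Sum>x\<in>vecs p n. \<Sum>y\<in>vecs p n. ee p (\<phi> x y)))\<^sup>2 \<le> real p ^ (2*n) * real (card K)"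
proof -
  let ?V = "vecs p n"
  let ?W = "?V \<times> ?V"
  define F where "F z = ee p (\<phi> (fst z) (snd z))" for z
  define \<psi> where "\<psi> k = qf n A (fst k) (fst k) + qf n D (snd k) (snd k) + qf n B (fst k) (snd k)
       + lf n u (fst k) + lf n v (snd k)" for k
  define \<alpha> where "\<alpha> k = (\<lambda>i. 2 * (\<Sum>j<n. A i j * fst k j) + (\<Sum>j<n. B i j * snd k j))" for k
  define \<beta> where "\<beta> k = (\<lambda>i. (\<Sum>j<n. fst k j * B j i) + 2 * (\<Sum>j<n. D i j * snd k j))" for k
  have S: "(\<Sum>x\<in>?V. \<Sum>y\<in>?V. ee p (\<phi> x y)) = (\<Sum>z\<in>?W. F z)"
    unfolding F_def by (simp add: sum.cartesian_product case_prod_unfold)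
  let ?S = "\<Sum>z\<in>?W. F z"
  have "complex_of_real ((cmod ?S)\<^sup>2) = ?S * cnj ?S" by (rule complex_norm_square)
  also have "\<dots> = (\<Sum>z\<in>?W. \<Sum>z'\<in>?W. F z * cnj (F z'))"
    by (simp add: sum_product)
  also have "\<dots> = (\<Sum>z'\<in>?W. \<Sum>z\<in>?W. F z * cnj (F z'))"
    by (rule sum.swap)
  also have "\<dots> = (\<Sum>z'\<in>?W. \<Sum>k\<in>?W. ee p (\<psi> k) * ee p (lf n (\<alpha> k) (fst z')) * ee p (lf n (\<beta> k) (snd z')))"
  proof (rule sum.cong[OF refl])
    fix z' assume z': "z' \<in> ?W"
    obtain x' y' where xy: "z' = (x', y')" by force
    have x': "x' \<in> ?V" and y': "y' \<in> ?V" using z' xy by auto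
    let ?\<tau> = "map_prod (vadd p x') (vadd p y')"
    have inj: "inj_on ?\<tau> ?W"
      by (intro map_prod_inj_on vadd_inj p)
    have img: "?\<tau> ` ?W = ?W"
      by (intro map_prod_surj_on vadd_bij p x' y')
    have "(\<Sum>z\<in>?W. F z * cnj (F z')) = (\<Sum>k\<in>?W. F (?\<tau> k) * cnj (F z'))"
      using sum.reindex[OF inj, of "\<lambda>z. F z * cnj (F z')"] img by simp
    also have "\<dots> = (\<Sum>k\<in>?W. ee p (\<psi> k) * ee p (lf n (\<alpha> k) x') * ee p (lf n (\<beta> k) y'))"
    proof (rule sum.cong[OF refl])
      fix k assume k: "k \<in> ?W"
      obtain h g where hg: "k = (h, g)" by force
      have "F (?\<tau> k) * cnj (F z') = ee p (\<phi> (vadd p x' h) (vadd p y' g) - \<phi> x' y')"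
        unfolding F_def xy hg by (simp add: ee_diff)
      also have "\<dots> = ee p (\<phi> (\<lambda>i. x' i + h i) (\<lambda>i. y' i + g i) - \<phi> x' y')"
      proof (rule ee_cong[OF p])
        have "\<phi> (vadd p x' h) (vadd p y' g) mod int p = \<phi> (\<lambda>i. x' i + h i) (\<lambda>i. y' i + g i) mod int p"
          unfolding \<phi>_def by (rule phase_cong) (simp_all add: vadd_mod)
        thus "(\<phi> (vadd p x' h) (vadd p y' g) - \<phi> x' y') mod int p =
              (\<phi> (\<lambda>i. x' i + h i) (\<lambda>i. y' i + g i) - \<phi> x' y') mod int p"
          by (metis mod_diff_left_eq)
      qed
      also have "\<phi> (\<lambda>i. x' i + h i) (\<lambda>i. y' i + g i) - \<phi> x' y' = \<psi> k + lf n (\<alpha> k) x' + lf n (\<beta> k) y'"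
        unfolding \<phi>_def \<psi>_def \<alpha>_def \<beta>_def hg fst_conv snd_conv
        by (rule phase_expand[OF sA sD])
      finally show "F (?\<tau> k) * cnj (F z') = ee p (\<psi> k) * ee p (lf n (\<alpha> k) x') * ee p (lf n (\<beta> k) y')"
        by (simp add: ee_add)
    qed
    finally show "(\<Sum>z\<in>?W. F z * cnj (F z')) = (\<Sum>k\<in>?W. ee p (\<psi> k) * ee p (lf n (\<alpha> k) (fst z')) * ee p (lf n (\<beta> k) (snd z')))"
      using xy by simp
  qed
  also have "\<dots> = (\<Sum>k\<in>?W. \<Sum>z'\<in>?W. ee p (\<psi> k) * ee p (lf n (\<alpha> k) (fst z')) * ee p (lf n (\<beta> k) (snd z')))"
    by (rule sum.swap)
  also have "\<dots> = (\<Sum>k\<in>?W. ee p (\<psi> k) * ((\<Sum>x'\<in>?V. ee p (lf n (\<alpha> k) x')) * (\<Sum>y'\<in>?V. ee p (lf n (\<beta> k) y'))))"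
  proof (rule sum.cong[OF refl])
    fix k
    have "(\<Sum>z'\<in>?W. ee p (\<psi> k) * ee p (lf n (\<alpha> k) (fst z')) * ee p (lf n (\<beta> k) (snd z')))
        = ee p (\<psi> k) * (\<Sum>z'\<in>?W. ee p (lf n (\<alpha> k) (fst z')) * ee p (lf n (\<beta> k) (snd z')))"
      by (simp add: sum_distrib_left mult.assoc)
    also have "(\<Sum>z'\<in>?W. ee p (lf n (\<alpha> k) (fst z')) * ee p (lf n (\<beta> k) (snd z')))
       = (\<Sum>x'\<in>?V. \<Sum>y'\<in>?V. ee p (lf n (\<alpha> k) x') * ee p (lf n (\<beta> k) y'))"
      by (simp add: sum.cartesian_product case_prod_unfold)
    also have "\<dots> = (\<Sum>x'\<in>?V. ee p (lf n (\<alpha> k) x')) * (\<Sum>y'\<in>?V. ee p (lf n (\<beta> k) y'))"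
      by (rule sum_product[symmetric])
    finally show "(\<Sum>z'\<in>?W. ee p (\<psi> k) * ee p (lf n (\<alpha> k) (fst z')) * ee p (lf n (\<beta> k) (snd z')))
       = ee p (\<psi> k) * ((\<Sum>x'\<in>?V. ee p (lf n (\<alpha> k) x')) * (\<Sum>y'\<in>?V. ee p (lf n (\<beta> k) y')))" .
  qed
  also have "\<dots> = (\<Sum>k\<in>?W. if k \<in> K then ee p (\<psi> k) * of_nat p ^ (2*n) else 0)"
  proof (rule sum.cong[OF refl])
    fix k assume k: "k \<in> ?W"
    show "ee p (\<psi> k) * ((\<Sum>x'\<in>?V. ee p (lf n (\<alpha> k) x')) * (\<Sum>y'\<in>?V. ee p (lf n (\<beta> k) y')))
       = (if k \<in> K then ee p (\<psi> k) * of_nat p ^ (2*n) else 0)"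
    proof -
      have kK: "k \<in> K \<longleftrightarrow> (\<forall>i<n. int p dvd \<alpha> k i) \<and> (\<forall>i<n. int p dvd \<beta> k i)"
        using k unfolding K_def \<alpha>_def \<beta>_def by (cases k) auto
      have pw: "(of_nat p ^ (2*n) :: complex) = of_nat p ^ n * of_nat p ^ n" by (simp add: mult_2 power_add)
      show ?thesis unfolding sum_vecs_ee_lf[OF p] kK pw by auto
    qed
  qed
  also have "\<dots> = (\<Sum>k\<in>K. ee p (\<psi> k)) * of_nat p ^ (2*n)"
  proof -
    have "K \<subseteq> ?W" unfolding K_def by auto
    hence KW: "K = {k\<in>?W. k \<in> K}" by auto
    have fW: "finite ?W" by simp
    have "(\<Sum>k\<in>{k\<in>?W. k \<in> K}. ee p (\<psi> k) * of_nat p ^ (2*n)) = (\<Sum>k\<in>?W. if k \<in> K then ee p (\<psi> k) * of_nat p ^ (2*n) else 0)"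
      by (rule sum.inter_filter[OF fW])
    hence "(\<Sum>k\<in>K. ee p (\<psi> k) * of_nat p ^ (2*n)) = (\<Sum>k\<in>?W. if k \<in> K then ee p (\<psi> k) * of_nat p ^ (2*n) else 0)"
      using KW by simp
    thus ?thesis by (simp add: sum_distrib_right)
  qed
  finally have eq: "complex_of_real ((cmod ?S)\<^sup>2) = (\<Sum>k\<in>K. ee p (\<psi> k)) * of_nat p ^ (2*n)" .
  have "(cmod ?S)\<^sup>2 = cmod (complex_of_real ((cmod ?S)\<^sup>2))"
    by (simp only: norm_of_real) simp
  also have "\<dots> = cmod (\<Sum>k\<in>K. ee p (\<psi> k)) * real p ^ (2*n)"
    unfolding eq by (simp add: norm_mult norm_power)
  also have "\<dots> \<le> real (card K) * real p ^ (2*n)"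
  proof (rule mult_right_mono)
    have "cmod (\<Sum>k\<in>K. ee p (\<psi> k)) \<le> (\<Sum>k\<in>K. cmod (ee p (\<psi> k)))" by (rule norm_sum)
    thus "cmod (\<Sum>k\<in>K. ee p (\<psi> k)) \<le> real (card K)" by simp
  qed simp
  finally show ?thesis using S by (simp add: mult.commute)
qed


lemma qf_cong_mat:
  assumes "\<forall>i<n. \<forall>j<n. A i j mod m = A' i j mod m"
  shows "qf n A x y mod m = qf n A' x y mod m"
  unfolding qf_def
proof (intro sum_mod_cong)
  fix i j assume i: "i \<in> {..<n}" and j: "j \<in> {..<n}"
  have "(x i * A i j * y j) mod m = (x i * (A i j mod m) * y j) mod m"
    by (metis mod_mult_left_eq mod_mult_right_eq)
  also have "\<dots> = (x i * (A' i j mod m) * y j) mod m" using assms i j by simp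
  also have "\<dots> = (x i * A' i j * y j) mod m"
    by (metis mod_mult_left_eq mod_mult_right_eq)
  finally show "(x i * A i j * y j) mod m = (x i * A' i j * y j) mod m" .
qed

lemma qf_lincomb: "(\<Sum>k<q. l k * qf n (M k) x y) = qf n (\<lambda>i j. \<Sum>k<q. l k * M k i j) x y"
proof -
  have "(\<Sum>k<q. l k * qf n (M k) x y) = (\<Sum>k<q. \<Sum>i<n. \<Sum>j<n. l k * (x i * M k i j * y j))"
    unfolding qf_def by (simp add: sum_distrib_left)
  also have "\<dots> = (\<Sum>i<n. \<Sum>k<q. \<Sum>j<n. l k * (x i * M k i j * y j))"
    by (rule sum.swap)
  also have "\<dots> = (\<Sum>i<n. \<Sum>j<n. \<Sum>k<q. l k * (x i * M k i j * y j))"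
    by (rule sum.cong[OF refl], rule sum.swap)
  also have "\<dots> = qf n (\<lambda>i j. \<Sum>k<q. l k * M k i j) x y"
    unfolding qf_def by (simp add: sum_distrib_left sum_distrib_right mult_ac)
  finally show ?thesis .
qed

lemma bil_qf: "bil p n M x y = qf n M x y mod int p"
  unfolding bil_def qf_def by simp

lemma bil_lincomb:
  "(\<Sum>k<length Ms. l k * bil p n (Ms ! k) x y) mod int p = qf n (mlincomb p n l Ms) x y mod int p"
proof -
  have "(\<Sum>k<length Ms. l k * bil p n (Ms ! k) x y) mod int p
      = (\<Sum>k<length Ms. l k * qf n (Ms ! k) x y) mod int p"
    unfolding bil_qf by (intro sum_mod_cong) (simp add: mod_mult_right_eq)
  also have "\<dots> = qf n (\<lambda>i j. \<Sum>k<length Ms. l k * (Ms ! k) i j) x y mod int p"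
    by (simp add: qf_lincomb)
  also have "\<dots> = qf n (mlincomb p n l Ms) x y mod int p"
    by (rule qf_cong_mat) (simp add: mlincomb_def)
  finally show ?thesis .
qed

lemma mlincomb_symm:
  assumes "\<forall>M\<in>set Ms. is_sym M"
  shows "symm (mlincomb p n l Ms)"
  unfolding symm_def mlincomb_def
proof (intro allI)
  fix i j
  have "\<forall>k<length Ms. (Ms ! k) i j = (Ms ! k) j i"
    using assms unfolding is_sym_def by (metis nth_mem)
  thus "(if i < n \<and> j < n then (\<Sum>k<length Ms. l k * (Ms ! k) i j) mod int p else 0) =
        (if j < n \<and> i < n then (\<Sum>k<length Ms. l k * (Ms ! k) j i) mod int p else 0)"
    by auto
qed

lemma mlincomb_zero: "mlincomb p n vzero Ms = (\<lambda>i j. 0)"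
  unfolding mlincomb_def vzero_def by (intro ext) simp

lemma two_dvd_cancel:
  assumes "prime p" "odd p" "int p dvd 2 * a"
  shows "int p dvd a"
proof -
  have "prime (int p)" using assms(1) by simp
  moreover have "\<not> int p dvd 2"
  proof
    assume "int p dvd 2"
    hence "p dvd 2" using int_dvd_int_iff[of p 2] by simp
    hence "p \<le> 2" by (simp add: dvd_imp_le)
    moreover have "p \<ge> 2" using assms(1) prime_ge_2_nat by blast
    ultimately have "p = 2" by simp
    thus False using assms(2) by simp
  qed
  ultimately show ?thesis using assms(3) prime_dvd_mult_iff by blast
qed

lemma kernel_bound':
  assumes "p \<ge> 2"
  shows "card {g\<in>vecs p n. \<forall>i<n. int p dvd (\<Sum>j<n. M i j * g j) + v i} * p ^ mrank p n M \<le> p ^ n"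
proof -
  have "card {g\<in>vecs p n. \<forall>i<n. int p dvd (\<Sum>j<n. M i j * g j) + v i} * p ^ mrank p n M
      \<le> p ^ (n - mrank p n M) * p ^ mrank p n M"
    by (intro mult_le_mono1 kernel_bound assms)
  also have "\<dots> = p ^ n" using mrank_le[OF assms, of n M] by (simp add: power_add[symmetric])
  finally show ?thesis .
qed

lemma K_bound:
  fixes A B D :: "nat \<Rightarrow> nat \<Rightarrow> int"
  assumes p: "prime p" "odd p"
    and nz: "(\<forall>i j. B i j = 0) \<longrightarrow> r \<le> mrank p n A \<or> r \<le> mrank p n D"
    and rB: "\<not> (\<forall>i j. B i j = 0) \<longrightarrow> r \<le> mrank p n B"
  defines "K \<equiv> {(h,g) \<in> vecs p n \<times> vecs p n.
      (\<forall>i<n. int p dvd 2 * (\<Sum>j<n. A i j * h j) + (\<Sum>j<n. B i j * g j)) \<and>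
      (\<forall>i<n. int p dvd (\<Sum>j<n. h j * B j i) + 2 * (\<Sum>j<n. D i j * g j))}"
  shows "card K * p ^ r \<le> p ^ (2*n)"
proof -
  have p2: "p \<ge> 2" using p(1) prime_ge_2_nat by blast
  have pr: "p ^ r \<le> p ^ mrank p n M" if "r \<le> mrank p n M" for M
    using that p2 by (simp add: power_increasing)
  have finK: "finite K" unfolding K_def by (rule finite_subset[of _ "vecs p n \<times> vecs p n"]) auto
  show ?thesis
  proof (cases "\<forall>i j. B i j = 0")
    case False
    let ?G = "\<lambda>h. {g\<in>vecs p n. \<forall>i<n. int p dvd (\<Sum>j<n. B i j * g j) + 2 * (\<Sum>j<n. A i j * h j)}"
    have "K \<subseteq> Sigma (vecs p n) ?G"
    proof
      fix z assume zK: "z \<in> K"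
      obtain h g where zhg: "z = (h,g)" by force
      have z: "z = (h,g)" "h \<in> vecs p n" "g \<in> vecs p n"
        "\<forall>i<n. int p dvd 2 * (\<Sum>j<n. A i j * h j) + (\<Sum>j<n. B i j * g j)"
        using zK unfolding K_def zhg by simp_all
      have "\<forall>i<n. int p dvd (\<Sum>j<n. B i j * g j) + 2 * (\<Sum>j<n. A i j * h j)"
        using z(4) by (metis add.commute)
      thus "z \<in> Sigma (vecs p n) ?G" using z(1-3) by simp
    qed
    hence "card K \<le> card (Sigma (vecs p n) ?G)" by (intro card_mono) auto
    also have "\<dots> = (\<Sum>h\<in>vecs p n. card (?G h))" by (rule card_SigmaI) auto
    finally have "card K * p ^ mrank p n B \<le> (\<Sum>h\<in>vecs p n. card (?G h)) * p ^ mrank p n B"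
      by (rule mult_le_mono1)
    also have "\<dots> = (\<Sum>h\<in>vecs p n. card (?G h) * p ^ mrank p n B)" by (simp add: sum_distrib_right)
    also have "\<dots> \<le> (\<Sum>h\<in>vecs p n. p ^ n)" by (intro sum_mono kernel_bound' p2)
    also have "\<dots> = p ^ (2*n)" by (simp add: card_vecs mult_2 power_add)
    finally have "card K * p ^ mrank p n B \<le> p ^ (2*n)" .
    moreover have "card K * p ^ r \<le> card K * p ^ mrank p n B"
      using pr rB False by simp
    ultimately show ?thesis by linarith
  next
    case True
    hence B0: "\<And>i j. B i j = 0" by blast
    let ?KA = "{h\<in>vecs p n. \<forall>i<n. int p dvd (\<Sum>j<n. A i j * h j) + 0}"
    let ?KD = "{g\<in>vecs p n. \<forall>i<n. int p dvd (\<Sum>j<n. D i j * g j) + 0}"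
    have "r \<le> mrank p n A \<or> r \<le> mrank p n D" using nz True by blast
    thus ?thesis
    proof
      assume rA: "r \<le> mrank p n A"
      have "K \<subseteq> ?KA \<times> vecs p n"
      proof
        fix z assume zK: "z \<in> K"
        obtain h g where zhg: "z = (h,g)" by force
        have z: "z = (h,g)" "h \<in> vecs p n" "g \<in> vecs p n"
          "\<forall>i<n. int p dvd 2 * (\<Sum>j<n. A i j * h j) + (\<Sum>j<n. B i j * g j)"
          using zK unfolding K_def zhg by simp_all
        have "\<forall>i<n. int p dvd (\<Sum>j<n. A i j * h j)"
        proof (intro allI impI)
          fix i assume "i < n"
          hence "int p dvd 2 * (\<Sum>j<n. A i j * h j)" using z(4) by (simp add: B0)
          thus "int p dvd (\<Sum>j<n. A i j * h j)" by (rule two_dvd_cancel[OF p])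
        qed
        thus "z \<in> ?KA \<times> vecs p n" using z by simp
      qed
      hence "card K \<le> card (?KA \<times> vecs p n)" by (rule card_mono[rotated]) simp
      hence "card K \<le> card ?KA * p ^ n" by (simp add: card_cartesian_product card_vecs)
      hence "card K * p ^ r \<le> (card ?KA * p ^ n) * p ^ mrank p n A"
        by (rule mult_le_mono[OF _ pr[OF rA]])
      hence "card K * p ^ r \<le> card ?KA * p ^ mrank p n A * p ^ n"
        by (simp add: mult_ac)
      also have "\<dots> \<le> p ^ n * p ^ n" by (intro mult_le_mono1 kernel_bound' p2)
      finally show ?thesis by (simp add: mult_2 power_add)
    next
      assume rD: "r \<le> mrank p n D"
      have "K \<subseteq> vecs p n \<times> ?KD"
      proof
        fix z assume zK: "z \<in> K"
        obtain h g where zhg: "z = (h,g)" by force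
        have z: "z = (h,g)" "h \<in> vecs p n" "g \<in> vecs p n"
          "\<forall>i<n. int p dvd (\<Sum>j<n. h j * B j i) + 2 * (\<Sum>j<n. D i j * g j)"
          using zK unfolding K_def zhg by simp_all
        have "\<forall>i<n. int p dvd (\<Sum>j<n. D i j * g j)"
        proof (intro allI impI)
          fix i assume "i < n"
          hence "int p dvd 2 * (\<Sum>j<n. D i j * g j)" using z(4) by (simp add: B0)
          thus "int p dvd (\<Sum>j<n. D i j * g j)" by (rule two_dvd_cancel[OF p])
        qed
        thus "z \<in> vecs p n \<times> ?KD" using z by simp
      qed
      hence "card K \<le> card (vecs p n \<times> ?KD)" by (rule card_mono[rotated]) simp
      hence "card K \<le> card ?KD * p ^ n" by (simp add: card_cartesian_product card_vecs mult.commute)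
      hence "card K * p ^ r \<le> (card ?KD * p ^ n) * p ^ mrank p n D"
        by (rule mult_le_mono[OF _ pr[OF rD]])
      hence "card K * p ^ r \<le> card ?KD * p ^ mrank p n D * p ^ n"
        by (simp add: mult_ac)
      also have "\<dots> \<le> p ^ n * p ^ n" by (intro mult_le_mono1 kernel_bound' p2)
      finally show ?thesis by (simp add: mult_2 power_add)
    qed
  qed
qed


lemma mrank_zero:
  assumes "p \<ge> 2" "\<forall>i j. M i j = 0"
  shows "mrank p n M = 0"
proof -
  have "card {g\<in>vecs p n. \<forall>i<n. int p dvd (\<Sum>j<n. M i j * g j) + 0} * p ^ mrank p n M \<le> p ^ n"
    by (rule kernel_bound'[OF assms(1)])
  moreover have "{g\<in>vecs p n. \<forall>i<n. int p dvd (\<Sum>j<n. M i j * g j) + 0} = vecs p n"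
    using assms(2) by auto
  ultimately have "p ^ n * p ^ mrank p n M \<le> p ^ n * 1" by (simp add: card_vecs)
  hence "p ^ mrank p n M \<le> 1" using assms(1) by (subst (asm) mult_le_cancel1) simp
  thus ?thesis using assms(1) one_less_power[of p "mrank p n M"] by (cases "mrank p n M = 0") auto
qed

lemma inner_bound:
  fixes u w :: "nat \<Rightarrow> int" and \<kappa> :: int
  assumes p: "prime p" "odd p"
    and sym: "\<forall>M\<in>set Ms. is_sym M"
    and rk: "\<forall>l\<in>vecs p (length Ms). l \<noteq> vzero \<longrightarrow> r \<le> mrank p n (mlincomb p n l Ms)"
    and lmv: "l \<in> vecs p (length Ms)" "m \<in> vecs p (length Ms)" "v \<in> vecs p (length Ms)"
    and nz: "\<not> (l = vzero \<and> m = vzero \<and> v = vzero)"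
  shows "cmod (\<Sum>x\<in>vecs p n. \<Sum>y\<in>vecs p n. ee p (qf n (mlincomb p n l Ms) x x + qf n (mlincomb p n m Ms) y y
            + qf n (mlincomb p n v Ms) x y + lf n u x + lf n w y + \<kappa>))
         \<le> real p powr (2 * real n - real r / 2)"
proof -
  let ?A = "mlincomb p n l Ms" and ?D = "mlincomb p n m Ms" and ?B = "mlincomb p n v Ms"
  have p2: "p \<ge> 2" using p(1) prime_ge_2_nat by blast
  hence p0: "p > 0" by simp
  let ?K = "{(h,g) \<in> vecs p n \<times> vecs p n.
      (\<forall>i<n. int p dvd 2 * (\<Sum>j<n. ?A i j * h j) + (\<Sum>j<n. ?B i j * g j)) \<and>
      (\<forall>i<n. int p dvd (\<Sum>j<n. h j * ?B j i) + 2 * (\<Sum>j<n. ?D i j * g j))}"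
  let ?S = "\<Sum>x\<in>vecs p n. \<Sum>y\<in>vecs p n. ee p (qf n ?A x x + qf n ?D y y + qf n ?B x y + lf n u x + lf n w y + \<kappa>)"
  have g: "(cmod ?S)\<^sup>2 \<le> real p ^ (2*n) * real (card ?K)"
    by (rule gauss_bound[OF p0 mlincomb_symm[OF sym] mlincomb_symm[OF sym]])
  have kb: "card ?K * p ^ r \<le> p ^ (2*n)"
  proof (rule K_bound[OF p])
    show "(\<forall>i j. ?B i j = 0) \<longrightarrow> r \<le> mrank p n ?A \<or> r \<le> mrank p n ?D"
    proof
      assume B0: "\<forall>i j. ?B i j = 0"
      show "r \<le> mrank p n ?A \<or> r \<le> mrank p n ?D"
      proof (cases "v = vzero")
        case True
        hence "l \<noteq> vzero \<or> m \<noteq> vzero" using nz by blast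
        thus ?thesis using rk lmv by blast
      next
        case False
        hence "r \<le> mrank p n ?B" using rk lmv by blast
        hence "r = 0" using mrank_zero[OF p2 B0] by simp
        thus ?thesis by simp
      qed
    qed
    show "\<not> (\<forall>i j. ?B i j = 0) \<longrightarrow> r \<le> mrank p n ?B"
    proof
      assume "\<not> (\<forall>i j. ?B i j = 0)"
      hence "v \<noteq> vzero" using mlincomb_zero[of p n Ms] by auto
      thus "r \<le> mrank p n ?B" using rk lmv by blast
    qed
  qed
  have pr: "real p ^ r > 0" using p0 by simp
  have "(cmod ?S)\<^sup>2 * real p ^ r \<le> real p ^ (2*n) * real (card ?K) * real p ^ r"
    by (rule mult_right_mono[OF g]) simp
  also have "\<dots> = real p ^ (2*n) * (real (card ?K) * real p ^ r)" by (simp only: mult.assoc)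
  also have "\<dots> \<le> real p ^ (2*n) * real p ^ (2*n)"
  proof -
    have "real (card ?K * p ^ r) \<le> real (p ^ (2*n))" using kb by (simp only: of_nat_le_iff)
    hence "real (card ?K) * real p ^ r \<le> real p ^ (2*n)" by simp
    thus ?thesis by (rule mult_left_mono) simp
  qed
  finally have sq: "(cmod ?S)\<^sup>2 \<le> real p ^ (2*n) * real p ^ (2*n) / real p ^ r"
    using pr by (simp add: field_simps)
  have pe: "(real p powr (2 * real n - real r / 2))\<^sup>2 = real p ^ (2*n) * real p ^ (2*n) / real p ^ r"
  proof -
    have "(real p powr (2 * real n - real r / 2))\<^sup>2 = real p powr (2 * (2 * real n - real r / 2))"
      using p0 by (subst powr_power) simp_all
    also have "2 * (2 * real n - real r / 2) = real (2*n) + real (2*n) - real r" by simp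
    also have "real p powr (real (2*n) + real (2*n) - real r) = real p ^ (2*n) * real p ^ (2*n) / real p ^ r"
    proof -
      have rp: "0 < real p" using p0 by simp
      show ?thesis by (simp only: powr_diff powr_add powr_realpow[OF rp])
    qed
    finally show ?thesis .
  qed
  show ?thesis
    by (rule power2_le_imp_le) (use sq pe in simp_all)
qed

definition Phi :: "nat \<Rightarrow> nat \<Rightarrow> (nat \<Rightarrow> nat \<Rightarrow> int) list \<Rightarrow> (nat \<Rightarrow> int) \<Rightarrow> (nat \<Rightarrow> int) \<Rightarrow> (nat \<Rightarrow> int)
   \<Rightarrow> (nat \<Rightarrow> int) \<Rightarrow> (nat \<Rightarrow> int) \<Rightarrow> (nat \<Rightarrow> int) \<Rightarrow> (nat \<Rightarrow> int) \<Rightarrow> (nat \<Rightarrow> int) \<Rightarrow> int" where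
  "Phi p n Ms a b c l m v x y = (\<Sum>k<length Ms. l k * (bil p n (Ms ! k) x x - a k)
      + m k * (bil p n (Ms ! k) y y - b k) + v k * (bil p n (Ms ! k) x y - c k))"

lemma Phi_cong:
  "Phi p n Ms a b c l m v x y mod int p =
   (qf n (mlincomb p n l Ms) x x + qf n (mlincomb p n m Ms) y y + qf n (mlincomb p n v Ms) x y
     - (\<Sum>k<length Ms. l k * a k + m k * b k + v k * c k)) mod int p"
proof -
  let ?q = "length Ms"
  let ?X = "\<lambda>k. l k * bil p n (Ms ! k) x x" and ?Y = "\<lambda>k. m k * bil p n (Ms ! k) y y"
    and ?Z = "\<lambda>k. v k * bil p n (Ms ! k) x y" and ?C = "\<lambda>k. l k * a k + m k * b k + v k * c k"
  have e: "\<And>k. l k * (bil p n (Ms ! k) x x - a k) + m k * (bil p n (Ms ! k) y y - b k) + v k * (bil p n (Ms ! k) x y - c k)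
       = (?X k + ?Y k + ?Z k) - ?C k"
    by (simp add: right_diff_distrib)
  have "Phi p n Ms a b c l m v x y = (\<Sum>k<?q. (?X k + ?Y k + ?Z k) - ?C k)"
    unfolding Phi_def e by (rule refl)
  also have "\<dots> = (\<Sum>k<?q. ?X k + ?Y k + ?Z k) - (\<Sum>k<?q. ?C k)" by (rule sum_subtractf)
  also have "\<dots> = (\<Sum>k<?q. ?X k) + (\<Sum>k<?q. ?Y k) + (\<Sum>k<?q. ?Z k) - (\<Sum>k<?q. ?C k)"
    by (simp only: sum.distrib)
  finally have eq: "Phi p n Ms a b c l m v x y = (\<Sum>k<?q. ?X k) + (\<Sum>k<?q. ?Y k) + (\<Sum>k<?q. ?Z k) - (\<Sum>k<?q. ?C k)" .
  have h1: "(\<Sum>k<?q. ?X k) mod int p = qf n (mlincomb p n l Ms) x x mod int p" by (rule bil_lincomb)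
  have h2: "(\<Sum>k<?q. ?Y k) mod int p = qf n (mlincomb p n m Ms) y y mod int p" by (rule bil_lincomb)
  have h3: "(\<Sum>k<?q. ?Z k) mod int p = qf n (mlincomb p n v Ms) x y mod int p" by (rule bil_lincomb)
  show ?thesis unfolding eq
    by (rule mod_diff_cong[OF mod_add_cong[OF mod_add_cong[OF h1 h2] h3] refl])
qed

lemma lin_part:
  fixes c bx x :: "nat \<Rightarrow> int" and ax :: "nat \<Rightarrow> nat \<Rightarrow> int"
  shows "(\<Sum>j<k. c j * ((\<Sum>i<n. ax j i * x i) + bx j)) = lf n (\<lambda>i. \<Sum>j<k. c j * ax j i) x + (\<Sum>j<k. c j * bx j)"
proof -
  have "(\<Sum>i<n. x i * (\<Sum>j<k. c j * ax j i)) = lf n (\<lambda>i. \<Sum>j<k. c j * ax j i) x"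
    unfolding lf_def by (rule sum.cong[OF refl]) (rule mult.commute)
  thus ?thesis unfolding swap_lin by simp
qed


lemma indicator3:
  "(if \<forall>k<q. A k \<and> B k \<and> C k then 1 else 0 :: complex)
   = (if \<forall>k<q. A k then 1 else 0) * (if \<forall>k<q. B k then 1 else 0) * (if \<forall>k<q. C k then 1 else 0)"
  by auto

lemma sum3_product:
  fixes f g h :: "(nat \<Rightarrow> int) \<Rightarrow> complex"
  shows "(\<Sum>l\<in>V. f l) * (\<Sum>m\<in>V. g m) * (\<Sum>v\<in>V. h v) = (\<Sum>t\<in>V \<times> V \<times> V. f (fst t) * g (fst (snd t)) * h (snd (snd t)))"
proof -
  have "(\<Sum>l\<in>V. f l) * (\<Sum>m\<in>V. g m) * (\<Sum>v\<in>V. h v) = (\<Sum>l\<in>V. f l) * ((\<Sum>m\<in>V. g m) * (\<Sum>v\<in>V. h v))"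
    by (simp only: mult.assoc)
  also have "(\<Sum>m\<in>V. g m) * (\<Sum>v\<in>V. h v) = (\<Sum>mv\<in>V \<times> V. g (fst mv) * h (snd mv))"
    by (simp only: sum_product sum.cartesian_product case_prod_beta')
  also have "(\<Sum>l\<in>V. f l) * (\<Sum>mv\<in>V \<times> V. g (fst mv) * h (snd mv)) = (\<Sum>t\<in>V \<times> V \<times> V. f (fst t) * (g (fst (snd t)) * h (snd (snd t))))"
    by (simp only: sum_product sum.cartesian_product case_prod_beta')
  finally show ?thesis by (simp only: mult.assoc)
qed

lemma count3:
  fixes P1 P2 P3 :: "'z \<Rightarrow> nat \<Rightarrow> int"
  assumes p: "p > 0" and fin: "finite Z"
  shows "(of_nat (card {z\<in>Z. \<forall>k<q. int p dvd P1 z k \<and> int p dvd P2 z k \<and> int p dvd P3 z k}) :: complex) * of_nat p ^ (3*q)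
       = (\<Sum>t\<in>vecs p q \<times> vecs p q \<times> vecs p q. \<Sum>z\<in>Z.
            ee p (\<Sum>k<q. fst t k * P1 z k + fst (snd t) k * P2 z k + snd (snd t) k * P3 z k))"
proof -
  let ?V = "vecs p q"
  define S where "S P z = (\<Sum>c\<in>?V. ee p (\<Sum>k<q. c k * P z k))" for P :: "'z \<Rightarrow> nat \<Rightarrow> int" and z
  have ind: "(if \<forall>k<q. int p dvd P z k then 1 else 0 :: complex) = S P z / of_nat p ^ q" for P z
    unfolding S_def by (rule indicator_vecs[OF p])
  have "(of_nat (card {z\<in>Z. \<forall>k<q. int p dvd P1 z k \<and> int p dvd P2 z k \<and> int p dvd P3 z k}) :: complex)
      = (\<Sum>z\<in>Z. if \<forall>k<q. int p dvd P1 z k \<and> int p dvd P2 z k \<and> int p dvd P3 z k then 1 else 0)"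
    by (rule card_indicator[OF fin])
  also have "\<dots> = (\<Sum>z\<in>Z. S P1 z * S P2 z * S P3 z) / of_nat p ^ (3*q)"
  proof -
    have "\<And>z. (if \<forall>k<q. int p dvd P1 z k \<and> int p dvd P2 z k \<and> int p dvd P3 z k then 1 else 0 :: complex)
        = S P1 z * S P2 z * S P3 z / of_nat p ^ (3*q)"
    proof -
      have "3*q = q+q+q" by simp
      hence pw: "(of_nat p ^ (3*q) :: complex) = of_nat p ^ q * of_nat p ^ q * of_nat p ^ q"
        by (simp only: power_add)
      fix z show "?thesis z" unfolding indicator3 ind pw by simp
    qed
    thus ?thesis by (simp add: sum_divide_distrib)
  qed
  also have "(\<Sum>z\<in>Z. S P1 z * S P2 z * S P3 z) = (\<Sum>z\<in>Z. \<Sum>t\<in>?V \<times> ?V \<times> ?V.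
            ee p (\<Sum>k<q. fst t k * P1 z k + fst (snd t) k * P2 z k + snd (snd t) k * P3 z k))"
  proof (rule sum.cong[OF refl])
    fix z
    have "S P1 z * S P2 z * S P3 z = (\<Sum>t\<in>?V \<times> ?V \<times> ?V. ee p (\<Sum>k<q. fst t k * P1 z k) *
          ee p (\<Sum>k<q. fst (snd t) k * P2 z k) * ee p (\<Sum>k<q. snd (snd t) k * P3 z k))"
      unfolding S_def by (rule sum3_product)
    also have "\<dots> = (\<Sum>t\<in>?V \<times> ?V \<times> ?V. ee p (\<Sum>k<q. fst t k * P1 z k + fst (snd t) k * P2 z k + snd (snd t) k * P3 z k))"
      by (simp only: ee_add[symmetric] sum.distrib)
    finally show "S P1 z * S P2 z * S P3 z = (\<Sum>t\<in>?V \<times> ?V \<times> ?V. ee p (\<Sum>k<q. fst t k * P1 z k + fst (snd t) k * P2 z k + snd (snd t) k * P3 z k))" .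
  qed
  also have "\<dots> = (\<Sum>t\<in>?V \<times> ?V \<times> ?V. \<Sum>z\<in>Z.
            ee p (\<Sum>k<q. fst t k * P1 z k + fst (snd t) k * P2 z k + snd (snd t) k * P3 z k))"
    by (rule sum.swap)
  finally show ?thesis using p by simp
qed

lemma T_bound:
  fixes ax ay :: "nat \<Rightarrow> nat \<Rightarrow> int" and bx byy a b c :: "nat \<Rightarrow> int" and kx ky n p r :: nat
    and Ms :: "(nat \<Rightarrow> nat \<Rightarrow> int) list"
  assumes p: "prime p" "odd p"
    and sym: "\<forall>M\<in>set Ms. is_sym M"
    and rk: "\<forall>l\<in>vecs p (length Ms). l \<noteq> vzero \<longrightarrow> r \<le> mrank p n (mlincomb p n l Ms)"
    and t: "t \<in> vecs p (length Ms) \<times> vecs p (length Ms) \<times> vecs p (length Ms)"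
    and tnz: "t \<noteq> (vzero, vzero, vzero)"
  defines "X \<equiv> {x\<in>vecs p n. \<forall>j<kx. int p dvd (\<Sum>i<n. ax j i * x i) + bx j}"
    and "Y \<equiv> {y\<in>vecs p n. \<forall>j<ky. int p dvd (\<Sum>i<n. ay j i * y i) + byy j}"
  shows "cmod (\<Sum>z\<in>X \<times> Y. ee p (Phi p n Ms a b c (fst t) (fst (snd t)) (snd (snd t)) (fst z) (snd z)))
         \<le> real p powr (2 * real n - real r / 2)"
proof -
  obtain l m v where tlmv: "t = (l, m, v)" by (cases t) auto
  have lmv: "l \<in> vecs p (length Ms)" "m \<in> vecs p (length Ms)" "v \<in> vecs p (length Ms)"
    using t tlmv by auto
  have nz: "\<not> (l = vzero \<and> m = vzero \<and> v = vzero)" using tnz tlmv by auto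
  have p2: "p \<ge> 2" using p(1) prime_ge_2_nat by blast
  hence p0: "p > 0" by simp
  let ?V = "vecs p n"
  let ?W = "?V \<times> ?V"
  let ?C = "vecs p kx \<times> vecs p ky"
  let ?E = "real p powr (2 * real n - real r / 2)"
  define Px where "Px x j = (\<Sum>i<n. ax j i * x i) + bx j" for x j
  define Py where "Py y j = (\<Sum>i<n. ay j i * y i) + byy j" for y j
  define F where "F z = ee p (Phi p n Ms a b c l m v (fst z) (snd z))" for z
  define G where "G cd z = ee p (\<Sum>j<kx. fst cd j * Px (fst z) j) * ee p (\<Sum>j<ky. snd cd j * Py (snd z) j)" for cd z
  define Pw where "Pw = (of_nat p ^ kx * of_nat p ^ ky :: complex)"
  have XY: "X \<times> Y = {z\<in>?W. z \<in> X \<times> Y}" unfolding X_def Y_def by auto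
  have "(\<Sum>z\<in>X \<times> Y. F z) = (\<Sum>z\<in>?W. if z \<in> X \<times> Y then F z else 0)"
    by (subst XY, rule sum.inter_filter) simp
  also have "\<dots> = (\<Sum>z\<in>?W. (\<Sum>cd\<in>?C. G cd z) / Pw * F z)"
  proof (rule sum.cong[OF refl])
    fix z assume z: "z \<in> ?W"
    have i1: "(if \<forall>j<kx. int p dvd Px (fst z) j then 1 else 0 :: complex) = (\<Sum>c\<in>vecs p kx. ee p (\<Sum>j<kx. c j * Px (fst z) j)) / of_nat p ^ kx"
      by (rule indicator_vecs[OF p0])
    have i2: "(if \<forall>j<ky. int p dvd Py (snd z) j then 1 else 0 :: complex) = (\<Sum>d\<in>vecs p ky. ee p (\<Sum>j<ky. d j * Py (snd z) j)) / of_nat p ^ ky"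
      by (rule indicator_vecs[OF p0])
    have "(\<Sum>cd\<in>?C. G cd z) = (\<Sum>c\<in>vecs p kx. ee p (\<Sum>j<kx. c j * Px (fst z) j)) * (\<Sum>d\<in>vecs p ky. ee p (\<Sum>j<ky. d j * Py (snd z) j))"
      unfolding G_def by (simp only: sum_product sum.cartesian_product case_prod_beta' fst_conv snd_conv)
    hence "(\<Sum>cd\<in>?C. G cd z) / Pw = (if \<forall>j<kx. int p dvd Px (fst z) j then 1 else 0 :: complex) * (if \<forall>j<ky. int p dvd Py (snd z) j then 1 else 0 :: complex)"
      unfolding i1 i2 Pw_def by simp
    moreover have "z \<in> X \<times> Y \<longleftrightarrow> (\<forall>j<kx. int p dvd Px (fst z) j) \<and> (\<forall>j<ky. int p dvd Py (snd z) j)"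
      using z unfolding X_def Y_def Px_def Py_def by (cases z) auto
    ultimately show "(if z \<in> X \<times> Y then F z else 0) = (\<Sum>cd\<in>?C. G cd z) / Pw * F z" by auto
  qed
  also have "\<dots> = (\<Sum>cd\<in>?C. \<Sum>z\<in>?W. G cd z * F z) / Pw"
    by (simp only: sum_distrib_right sum_divide_distrib times_divide_eq_left) (rule sum.swap)
  finally have eq1: "(\<Sum>z\<in>X \<times> Y. F z) = (\<Sum>cd\<in>?C. \<Sum>z\<in>?W. G cd z * F z) / Pw" .
  have inner: "cmod (\<Sum>z\<in>?W. G cd z * F z) \<le> ?E" if cd: "cd \<in> ?C" for cd
  proof -
    obtain cc dd where cdd: "cd = (cc, dd)" by force
    define u where "u = (\<lambda>i. \<Sum>j<kx. cc j * ax j i)"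
    define w where "w = (\<lambda>i. \<Sum>j<ky. dd j * ay j i)"
    define \<kappa> where "\<kappa> = (\<Sum>j<kx. cc j * bx j) + (\<Sum>j<ky. dd j * byy j) - (\<Sum>k<length Ms. l k * a k + m k * b k + v k * c k)"
    define \<phi> where "\<phi> x y = qf n (mlincomb p n l Ms) x x + qf n (mlincomb p n m Ms) y y
            + qf n (mlincomb p n v Ms) x y + lf n u x + lf n w y + \<kappa>" for x y
    have GF: "G cd z * F z = ee p (\<phi> (fst z) (snd z))" for z
    proof -
      have "G cd z * F z = ee p ((\<Sum>j<kx. cc j * Px (fst z) j) + (\<Sum>j<ky. dd j * Py (snd z) j) + Phi p n Ms a b c l m v (fst z) (snd z))"
        unfolding G_def F_def cdd by (simp add: ee_add)
      also have "\<dots> = ee p (\<phi> (fst z) (snd z))"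
      proof (rule ee_cong[OF p0])
        have l1: "(\<Sum>j<kx. cc j * Px (fst z) j) = lf n u (fst z) + (\<Sum>j<kx. cc j * bx j)"
          unfolding Px_def u_def by (rule lin_part)
        have l2: "(\<Sum>j<ky. dd j * Py (snd z) j) = lf n w (snd z) + (\<Sum>j<ky. dd j * byy j)"
          unfolding Py_def w_def by (rule lin_part)
        have "((\<Sum>j<kx. cc j * Px (fst z) j) + (\<Sum>j<ky. dd j * Py (snd z) j) + Phi p n Ms a b c l m v (fst z) (snd z)) mod int p
          = ((lf n u (fst z) + (\<Sum>j<kx. cc j * bx j)) + (lf n w (snd z) + (\<Sum>j<ky. dd j * byy j)) +
             (qf n (mlincomb p n l Ms) (fst z) (fst z) + qf n (mlincomb p n m Ms) (snd z) (snd z) + qf n (mlincomb p n v Ms) (fst z) (snd z)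
             - (\<Sum>k<length Ms. l k * a k + m k * b k + v k * c k))) mod int p"
          unfolding l1 l2 by (rule mod_add_cong[OF refl Phi_cong])
        also have "\<dots> = \<phi> (fst z) (snd z) mod int p"
          unfolding \<phi>_def \<kappa>_def by (rule arg_cong[where f="\<lambda>t. t mod int p"]) linarith
        finally show "((\<Sum>j<kx. cc j * Px (fst z) j) + (\<Sum>j<ky. dd j * Py (snd z) j) + Phi p n Ms a b c l m v (fst z) (snd z)) mod int p
          = \<phi> (fst z) (snd z) mod int p" .
      qed
      finally show ?thesis .
    qed
    have "(\<Sum>z\<in>?W. G cd z * F z) = (\<Sum>x\<in>?V. \<Sum>y\<in>?V. ee p (\<phi> x y))"
      unfolding GF by (simp only: sum.cartesian_product case_prod_beta')
    also have "cmod \<dots> \<le> ?E"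
      unfolding \<phi>_def by (rule inner_bound[OF p sym rk lmv nz])
    finally show ?thesis .
  qed
  have "cmod (\<Sum>cd\<in>?C. \<Sum>z\<in>?W. G cd z * F z) \<le> (\<Sum>cd\<in>?C. cmod (\<Sum>z\<in>?W. G cd z * F z))"
    by (rule norm_sum)
  also have "\<dots> \<le> (\<Sum>cd\<in>?C. ?E)" by (rule sum_mono) (rule inner)
  also have "\<dots> = real p ^ kx * real p ^ ky * ?E" by (simp add: card_cartesian_product card_vecs)
  finally have b: "cmod (\<Sum>cd\<in>?C. \<Sum>z\<in>?W. G cd z * F z) \<le> real p ^ kx * real p ^ ky * ?E" .
  have "cmod (\<Sum>z\<in>X \<times> Y. F z) = cmod (\<Sum>cd\<in>?C. \<Sum>z\<in>?W. G cd z * F z) / (real p ^ kx * real p ^ ky)"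
    unfolding eq1 Pw_def by (simp add: norm_divide norm_mult norm_power)
  also have "\<dots> \<le> ?E" using b p0 by (simp add: divide_le_eq mult_ac)
  finally show ?thesis unfolding F_def tlmv by simp
qed

lemma Phi_zero: "Phi p n Ms a b c vzero vzero vzero x y = 0"
  unfolding Phi_def vzero_def by simp

theorem count_main:
  fixes ax ay :: "nat \<Rightarrow> nat \<Rightarrow> int" and bx byy a b c :: "nat \<Rightarrow> int" and kx ky n p r :: nat
    and Ms :: "(nat \<Rightarrow> nat \<Rightarrow> int) list"
  assumes p: "prime p" "odd p"
    and sym: "\<forall>M\<in>set Ms. is_sym M"
    and rk: "\<forall>l\<in>vecs p (length Ms). l \<noteq> vzero \<longrightarrow> r \<le> mrank p n (mlincomb p n l Ms)"
  defines "X \<equiv> {x\<in>vecs p n. \<forall>j<kx. int p dvd (\<Sum>i<n. ax j i * x i) + bx j}"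
    and "Y \<equiv> {y\<in>vecs p n. \<forall>j<ky. int p dvd (\<Sum>i<n. ay j i * y i) + byy j}"
  defines "N \<equiv> card {z\<in>X \<times> Y. \<forall>k<length Ms. int p dvd bil p n (Ms!k) (fst z) (fst z) - a k
       \<and> int p dvd bil p n (Ms!k) (snd z) (snd z) - b k \<and> int p dvd bil p n (Ms!k) (fst z) (snd z) - c k}"
  shows "\<bar>real N - real (card X) * real (card Y) / real p ^ (3 * length Ms)\<bar> \<le> real p powr (2 * real n - real r / 2)"
proof -
  let ?q = "length Ms"
  let ?V3 = "vecs p ?q \<times> vecs p ?q \<times> vecs p ?q"
  let ?E = "real p powr (2 * real n - real r / 2)"
  let ?t0 = "(vzero, vzero, vzero) :: (nat \<Rightarrow> int) \<times> (nat \<Rightarrow> int) \<times> (nat \<Rightarrow> int)"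
  have p2: "p \<ge> 2" using p(1) prime_ge_2_nat by blast
  hence p0: "p > 0" by simp
  define T where "T t = (\<Sum>z\<in>X \<times> Y. ee p (Phi p n Ms a b c (fst t) (fst (snd t)) (snd (snd t)) (fst z) (snd z)))" for t
  have finXY: "finite (X \<times> Y)" unfolding X_def Y_def by simp
  have "(of_nat N :: complex) * of_nat p ^ (3 * ?q) = (\<Sum>t\<in>?V3. T t)"
    unfolding N_def T_def Phi_def by (rule count3[OF p0 finXY])
  also have "\<dots> = T ?t0 + (\<Sum>t\<in>?V3 - {?t0}. T t)"
    by (rule sum.remove) (use p0 in simp_all)
  also have "T ?t0 = of_nat (card X * card Y)"
    unfolding T_def by (simp add: Phi_zero card_cartesian_product)
  finally have eq: "(of_nat N :: complex) * of_nat p ^ (3 * ?q) - of_nat (card X * card Y) = (\<Sum>t\<in>?V3 - {?t0}. T t)"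
    by simp
  have "cmod (\<Sum>t\<in>?V3 - {?t0}. T t) \<le> (\<Sum>t\<in>?V3 - {?t0}. cmod (T t))" by (rule norm_sum)
  also have "\<dots> \<le> (\<Sum>t\<in>?V3 - {?t0}. ?E)"
  proof (rule sum_mono)
    fix t assume "t \<in> ?V3 - {?t0}"
    thus "cmod (T t) \<le> ?E" unfolding T_def X_def Y_def
      by (intro T_bound[OF p sym rk]) auto
  qed
  also have "\<dots> \<le> real p ^ (3 * ?q) * ?E"
  proof -
    have "card (?V3 - {?t0}) \<le> card ?V3" by (rule card_Diff1_le)
    also have "card ?V3 = p ^ (3 * ?q)"
      by (simp add: card_cartesian_product card_vecs power_add[symmetric] numeral_3_eq_3)
    finally have "real (card (?V3 - {?t0})) \<le> real p ^ (3 * ?q)" by (simp add: of_nat_le_iff[symmetric])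
    thus ?thesis by (simp add: mult_right_mono)
  qed
  finally have b: "cmod ((of_nat N :: complex) * of_nat p ^ (3 * ?q) - of_nat (card X * card Y)) \<le> real p ^ (3 * ?q) * ?E"
    unfolding eq .
  have "(of_nat N :: complex) * of_nat p ^ (3 * ?q) - of_nat (card X * card Y)
        = complex_of_real (real N * real p ^ (3 * ?q) - real (card X) * real (card Y))" by simp
  hence "\<bar>real N * real p ^ (3 * ?q) - real (card X) * real (card Y)\<bar> \<le> real p ^ (3 * ?q) * ?E"
    using b by (simp only: norm_of_real)
  moreover have "real N * real p ^ (3 * ?q) - real (card X) * real (card Y)
      = real p ^ (3 * ?q) * (real N - real (card X) * real (card Y) / real p ^ (3 * ?q))"
    using p0 by (simp add: field_simps)
  ultimately have "real p ^ (3 * ?q) * \<bar>real N - real (card X) * real (card Y) / real p ^ (3 * ?q)\<bar> \<le> real p ^ (3 * ?q) * ?E"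
    by (simp add: abs_mult)
  thus ?thesis using p0 by (simp add: mult_le_cancel_left)
qed


definition ceq :: "nat \<Rightarrow> nat \<Rightarrow> (nat \<Rightarrow> int) \<Rightarrow> (nat \<Rightarrow> int) \<Rightarrow> bool" where
  "ceq p n x x' \<longleftrightarrow> (\<forall>i<n. x i mod int p = x' i mod int p)"

lemma vsub_mod: "(vsub p x h) i mod int p = (x i - h i) mod int p"
  unfolding vsub_def by simp

lemma vsub_vecs: "p > 0 \<Longrightarrow> x \<in> vecs p n \<Longrightarrow> h \<in> vecs p n \<Longrightarrow> vsub p x h \<in> vecs p n"
  unfolding vecs_def vsub_def Fp_def by auto

lemma vecs_eq_mod:
  assumes "u \<in> vecs p n" "u' \<in> vecs p n" "ceq p n u u'"
  shows "u = u'"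
proof
  fix i show "u i = u' i"
  proof (cases "i < n")
    case True
    hence "u i mod int p = u' i mod int p" using assms(3) unfolding ceq_def by blast
    moreover have "u i mod int p = u i" "u' i mod int p = u' i"
      using assms(1,2) True unfolding vecs_def Fp_def by auto
    ultimately show ?thesis by simp
  next
    case False thus ?thesis using assms(1,2) unfolding vecs_def by auto
  qed
qed

lemma ceq_vadd: "ceq p n (vadd p x h) (\<lambda>i. x i + h i)"
  unfolding ceq_def by (simp add: vadd_mod)

lemma ceq_vsub: "ceq p n (vsub p x h) (\<lambda>i. x i - h i)"
  unfolding ceq_def by (simp add: vsub_mod)

lemma ceq_refl: "ceq p n x x" unfolding ceq_def by simp

lemma ceq_sym: "ceq p n x y \<Longrightarrow> ceq p n y x" unfolding ceq_def by simp

lemma ceq_trans: "ceq p n x y \<Longrightarrow> ceq p n y z \<Longrightarrow> ceq p n x z" unfolding ceq_def by simp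

lemma ceq_add: "ceq p n x x' \<Longrightarrow> ceq p n h h' \<Longrightarrow> ceq p n (\<lambda>i. x i + h i) (\<lambda>i. x' i + h' i)"
  unfolding ceq_def by (metis mod_add_cong)

lemma ceq_diff: "ceq p n x x' \<Longrightarrow> ceq p n h h' \<Longrightarrow> ceq p n (\<lambda>i. x i - h i) (\<lambda>i. x' i - h' i)"
  unfolding ceq_def by (metis mod_diff_cong)

lemma ceq_vadd': "ceq p n x x' \<Longrightarrow> ceq p n h h' \<Longrightarrow> ceq p n (vadd p x h) (\<lambda>i. x' i + h' i)"
  by (rule ceq_trans[OF ceq_vadd ceq_add])

lemma ceq_vsub': "ceq p n x x' \<Longrightarrow> ceq p n h h' \<Longrightarrow> ceq p n (vsub p x h) (\<lambda>i. x' i - h' i)"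
  by (rule ceq_trans[OF ceq_vsub ceq_diff])

lemma qf_ceq: "ceq p n x x' \<Longrightarrow> ceq p n y y' \<Longrightarrow> qf n M x y mod int p = qf n M x' y' mod int p"
  unfolding ceq_def by (rule qf_cong)

lemma lf_ceq: "ceq p n x x' \<Longrightarrow> lf n r x mod int p = lf n r x' mod int p"
  unfolding ceq_def by (rule lf_cong)

lemma dvd_mod_iff: "a mod m = a' mod m \<Longrightarrow> (m::int) dvd a - d \<longleftrightarrow> m dvd a' - d"
  by (metis mod_diff_cong mod_eq_dvd_iff)

lemma qf_ceq_dvd: "ceq p n x x' \<Longrightarrow> ceq p n y y' \<Longrightarrow> int p dvd qf n M x y - d \<longleftrightarrow> int p dvd qf n M x' y' - d"
  by (rule dvd_mod_iff[OF qf_ceq])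

lemma lf_ceq_dvd: "ceq p n x x' \<Longrightarrow> int p dvd lf n r x - d \<longleftrightarrow> int p dvd lf n r x' - d"
  by (rule dvd_mod_iff[OF lf_ceq])

lemma qf_diffL: "qf n A (\<lambda>i. x i - h i) y = qf n A x y - qf n A h y"
  unfolding qf_def by (simp add: left_diff_distrib sum_subtractf)

lemma qf_diffR: "qf n A x (\<lambda>i. y i - h i) = qf n A x y - qf n A x h"
  unfolding qf_def by (simp add: right_diff_distrib sum_subtractf)

lemma lf_diffV: "lf n u (\<lambda>i. x i - h i) = lf n u x - lf n u h"
  unfolding lf_def by (simp add: right_diff_distrib sum_subtractf)

lemma Fp_mod: "a \<in> Fp p \<Longrightarrow> a mod int p = a"
  unfolding Fp_def by simp

lemma map_eq_dvd:
  assumes "fvec p (length L) u" "p > 0"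
  shows "map (\<lambda>r. F r mod int p) L = u \<longleftrightarrow> (\<forall>j<length L. int p dvd F (L ! j) - u ! j)"
proof -
  have len: "length u = length L" using assms(1) unfolding fvec_def by simp
  have "map (\<lambda>r. F r mod int p) L = u \<longleftrightarrow> (\<forall>j<length L. F (L ! j) mod int p = u ! j)"
    using len by (auto simp: list_eq_iff_nth_eq)
  also have "\<dots> \<longleftrightarrow> (\<forall>j<length L. int p dvd F (L ! j) - u ! j)"
  proof -
    have "\<And>j. j < length L \<Longrightarrow> u ! j mod int p = u ! j"
      using assms(1) len unfolding fvec_def by (metis Fp_mod nth_mem subsetD)
    hence "\<And>j. j < length L \<Longrightarrow> (F (L ! j) mod int p = u ! j) \<longleftrightarrow> int p dvd F (L ! j) - u ! j"
      by (metis mod_eq_dvd_iff)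
    thus ?thesis by blast
  qed
  finally show ?thesis .
qed

lemma betaL_eq: "betaL p n Ls x = map (\<lambda>r. lf n r x mod int p) Ls"
  unfolding betaL_def dotp_def lf_def by (simp add: mult.commute)

lemma betaQ_eq: "betaQ p n Ms x y = map (\<lambda>M. qf n M x y mod int p) Ms"
  unfolding betaQ_def bil_qf by simp

lemma ladd_nth: "j < length u \<Longrightarrow> j < length v \<Longrightarrow> ladd p u v ! j = (u ! j + v ! j) mod int p"
  unfolding ladd_def by simp

lemma ladd_length: "length (ladd p u v) = min (length u) (length v)"
  unfolding ladd_def by simp


lemma lf_zero: "lf n r (\<lambda>i. 0) = 0" unfolding lf_def by simp

lemma atom_dvd:
  assumes "P \<in> atom p n Ls Ms e" "fvec p (length Ls) (fst e)" "fvec p (length Ms) (snd e)"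
    "ceq p n P P'" "p > 0"
  shows "(\<forall>j<length Ls. int p dvd lf n (Ls ! j) P' - fst e ! j) \<and>
         (\<forall>k<length Ms. int p dvd qf n (Ms ! k) P' P' - snd e ! k)"
proof -
  have b: "betaL p n Ls P = fst e" "betaQ p n Ms P P = snd e"
    using assms(1) unfolding atom_def betaB_def by auto
  have "\<forall>j<length Ls. int p dvd lf n (Ls ! j) P - fst e ! j"
    using b(1) unfolding betaL_eq map_eq_dvd[OF assms(2,5)] .
  moreover have "\<forall>k<length Ms. int p dvd qf n (Ms ! k) P P - snd e ! k"
    using b(2) unfolding betaQ_eq map_eq_dvd[OF assms(3,5)] .
  ultimately show ?thesis
    using lf_ceq_dvd[OF assms(4)] qf_ceq_dvd[OF assms(4) assms(4)] by simp
qed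

lemma omega_point:
  assumes "(w, ha, hb, hc) \<in> Omega p n B"
  shows "\<exists>P\<in>B. ceq p n P (\<lambda>i. w i + (if w1 then ha i else 0) + (if w2 then hb i else 0) + (if w3 then hc i else 0))"
proof -
  let ?P = "vadd p (vadd p (vadd p w (sel w1 ha)) (sel w2 hb)) (sel w3 hc)"
  have "?P \<in> B" using assms unfolding Omega_def by auto
  moreover have "ceq p n ?P (\<lambda>i. w i + (if w1 then ha i else 0) + (if w2 then hb i else 0) + (if w3 then hc i else 0))"
  proof -
    have s: "\<And>b h. sel b h = (\<lambda>i. if b then h i else 0)" unfolding sel_def vzero_def by auto
    show ?thesis unfolding s by (intro ceq_vadd' ceq_refl)
  qed
  ultimately show ?thesis by blast
qed

locale setting =
  fixes p n :: nat and Ls :: "(nat \<Rightarrow> int) list" and Ms :: "(nat \<Rightarrow> nat \<Rightarrow> int) list"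
    and da db dc e :: "int list \<times> int list" and dab dac dbc :: "int list"
    and w ha hb hc :: "nat \<Rightarrow> int"
  assumes prime: "prime p" and odd: "odd p"
    and qfac: "quad_factor p n Ms"
    and fe: "fvec p (length Ls) (fst e)" "fvec p (length Ms) (snd e)"
    and fda: "fvec p (length Ls) (fst da)" "fvec p (length Ms) (snd da)"
    and fdb: "fvec p (length Ls) (fst db)" "fvec p (length Ms) (snd db)"
    and fdc: "fvec p (length Ls) (fst dc)" "fvec p (length Ms) (snd dc)"
    and fdab: "fvec p (length Ms) dab" and fdac: "fvec p (length Ms) dac" and fdbc: "fvec p (length Ms) dbc"
    and sig: "Sigma_d p (length Ls) (da, db, dc, dab, dac, dbc) = e"
    and om: "(w, ha, hb, hc) \<in> Omega p n (atom p n Ls Ms e)"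
begin

lemma p2: "p \<ge> 2" using prime prime_ge_2_nat by blast
lemma p0: "p > 0" using p2 by simp

lemma wv: "w \<in> vecs p n" "ha \<in> vecs p n" "hb \<in> vecs p n" "hc \<in> vecs p n"
  using om unfolding Omega_def by auto

lemma symM: "k < length Ms \<Longrightarrow> symm (Ms ! k)"
  using qfac unfolding quad_factor_def is_sym_def symm_def by (metis nth_mem)

lemma pt:
  "(\<forall>j<length Ls. int p dvd lf n (Ls ! j) (\<lambda>i. w i + (if w1 then ha i else 0) + (if w2 then hb i else 0) + (if w3 then hc i else 0)) - fst e ! j) \<and>
   (\<forall>k<length Ms. int p dvd qf n (Ms ! k) (\<lambda>i. w i + (if w1 then ha i else 0) + (if w2 then hb i else 0) + (if w3 then hc i else 0))
        (\<lambda>i. w i + (if w1 then ha i else 0) + (if w2 then hb i else 0) + (if w3 then hc i else 0)) - snd e ! k)"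
  using omega_point[OF om, of w1 w2 w3] atom_dvd[OF _ fe _ p0] by blast

lemma omL:
  assumes j: "j < length Ls"
  shows "int p dvd lf n (Ls ! j) w - fst e ! j" "int p dvd lf n (Ls ! j) ha"
    "int p dvd lf n (Ls ! j) hb" "int p dvd lf n (Ls ! j) hc"
proof -
  let ?r = "Ls ! j"
  have w0: "int p dvd lf n ?r w - fst e ! j" using pt[of False False False] j by simp
  thus "int p dvd lf n ?r w - fst e ! j" .
  have "int p dvd lf n ?r (\<lambda>i. w i + ha i) - fst e ! j" using pt[of True False False] j by simp
  hence "int p dvd (lf n ?r (\<lambda>i. w i + ha i) - fst e ! j) - (lf n ?r w - fst e ! j)" using w0 by (rule dvd_diff)
  thus "int p dvd lf n ?r ha" by (simp add: lf_addV)
  have "int p dvd lf n ?r (\<lambda>i. w i + hb i) - fst e ! j" using pt[of False True False] j by simp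
  hence "int p dvd (lf n ?r (\<lambda>i. w i + hb i) - fst e ! j) - (lf n ?r w - fst e ! j)" using w0 by (rule dvd_diff)
  thus "int p dvd lf n ?r hb" by (simp add: lf_addV)
  have "int p dvd lf n ?r (\<lambda>i. w i + hc i) - fst e ! j" using pt[of False False True] j by simp
  hence "int p dvd (lf n ?r (\<lambda>i. w i + hc i) - fst e ! j) - (lf n ?r w - fst e ! j)" using w0 by (rule dvd_diff)
  thus "int p dvd lf n ?r hc" by (simp add: lf_addV)
qed

lemma dvd_eqI: "(m::int) dvd u \<Longrightarrow> u = x \<Longrightarrow> m dvd x" by simp

lemma omQ:
  assumes k: "k < length Ms"
  defines "M \<equiv> Ms ! k"
  shows "int p dvd qf n M w w - snd e ! k"
    "int p dvd 2 * qf n M w ha + qf n M ha ha"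
    "int p dvd 2 * qf n M w hb + qf n M hb hb"
    "int p dvd 2 * qf n M w hc + qf n M hc hc"
    "int p dvd qf n M ha hb" "int p dvd qf n M ha hc" "int p dvd qf n M hb hc"
proof -
  have sM: "symm M" unfolding M_def by (rule symM[OF k])
  have s1: "qf n M ha w = qf n M w ha" "qf n M hb w = qf n M w hb" "qf n M hc w = qf n M w hc"
     "qf n M hb ha = qf n M ha hb" "qf n M hc ha = qf n M ha hc" "qf n M hc hb = qf n M hb hc"
    using qf_sym[OF sM] by auto
  have w0: "int p dvd qf n M w w - snd e ! k" using pt[of False False False] k unfolding M_def by simp
  thus "int p dvd qf n M w w - snd e ! k" .
  have a0: "int p dvd qf n M (\<lambda>i. w i + ha i) (\<lambda>i. w i + ha i) - snd e ! k" using pt[of True False False] k unfolding M_def by simp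
  have a1: "int p dvd 2 * qf n M w ha + qf n M ha ha"
    by (rule dvd_eqI[OF dvd_diff[OF a0 w0]]) (simp add: qf_addL qf_addR s1)
  thus "int p dvd 2 * qf n M w ha + qf n M ha ha" .
  have b0: "int p dvd qf n M (\<lambda>i. w i + hb i) (\<lambda>i. w i + hb i) - snd e ! k" using pt[of False True False] k unfolding M_def by simp
  have b1: "int p dvd 2 * qf n M w hb + qf n M hb hb"
    by (rule dvd_eqI[OF dvd_diff[OF b0 w0]]) (simp add: qf_addL qf_addR s1)
  thus "int p dvd 2 * qf n M w hb + qf n M hb hb" .
  have c0: "int p dvd qf n M (\<lambda>i. w i + hc i) (\<lambda>i. w i + hc i) - snd e ! k" using pt[of False False True] k unfolding M_def by simp
  have c1: "int p dvd 2 * qf n M w hc + qf n M hc hc"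
    by (rule dvd_eqI[OF dvd_diff[OF c0 w0]]) (simp add: qf_addL qf_addR s1)
  thus "int p dvd 2 * qf n M w hc + qf n M hc hc" .
  have ab0: "int p dvd qf n M (\<lambda>i. w i + ha i + hb i) (\<lambda>i. w i + ha i + hb i) - snd e ! k"
    using pt[of True True False] k unfolding M_def by simp
  have "int p dvd 2 * qf n M ha hb"
    by (rule dvd_eqI[OF dvd_diff[OF dvd_diff[OF dvd_diff[OF ab0 w0] a1] b1]]) (simp add: qf_addL qf_addR s1)
  thus "int p dvd qf n M ha hb" by (rule two_dvd_cancel[OF prime odd])
  have ac0: "int p dvd qf n M (\<lambda>i. w i + ha i + hc i) (\<lambda>i. w i + ha i + hc i) - snd e ! k"
    using pt[of True False True] k unfolding M_def by simp
  have "int p dvd 2 * qf n M ha hc"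
    by (rule dvd_eqI[OF dvd_diff[OF dvd_diff[OF dvd_diff[OF ac0 w0] a1] c1]]) (simp add: qf_addL qf_addR s1)
  thus "int p dvd qf n M ha hc" by (rule two_dvd_cancel[OF prime odd])
  have bc0: "int p dvd qf n M (\<lambda>i. w i + hb i + hc i) (\<lambda>i. w i + hb i + hc i) - snd e ! k"
    using pt[of False True True] k unfolding M_def by simp
  have "int p dvd 2 * qf n M hb hc"
    by (rule dvd_eqI[OF dvd_diff[OF dvd_diff[OF dvd_diff[OF bc0 w0] b1] c1]]) (simp add: qf_addL qf_addR s1)
  thus "int p dvd qf n M hb hc" by (rule two_dvd_cancel[OF prime odd])
qed

lemma sigL:
  assumes j: "j < length Ls"
  shows "int p dvd fst e ! j - (fst da ! j + fst db ! j + fst dc ! j)"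
proof -
  let ?l = "length Ls"
  have len: "length (fst da) = ?l" "length (fst db) = ?l" "length (fst dc) = ?l"
    using fda fdb fdc unfolding fvec_def by auto
  have "fst e = ladd p (ladd p (ladd p (ladd p (ladd p (fst da) (fst db)) (fst dc)) (replicate ?l 0)) (replicate ?l 0)) (replicate ?l 0)"
    using sig[symmetric] unfolding Sigma_d_def padd_def twozero_def by simp
  hence "fst e ! j = ((((((fst da ! j + fst db ! j) mod int p + fst dc ! j) mod int p + 0) mod int p + 0) mod int p) + 0) mod int p"
    using j len by (simp add: ladd_nth ladd_length)
  hence "fst e ! j mod int p = (fst da ! j + fst db ! j + fst dc ! j) mod int p"
    by (simp add: mod_add_left_eq)
  thus ?thesis by (simp add: mod_eq_dvd_iff)
qed

lemma sigQ:
  assumes k: "k < length Ms"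
  shows "int p dvd snd e ! k - (snd da ! k + snd db ! k + snd dc ! k + 2 * dab ! k + 2 * dac ! k + 2 * dbc ! k)"
proof -
  let ?q = "length Ms"
  have len: "length (snd da) = ?q" "length (snd db) = ?q" "length (snd dc) = ?q"
    "length dab = ?q" "length dac = ?q" "length dbc = ?q"
    using fda fdb fdc fdab fdac fdbc unfolding fvec_def by auto
  have "snd e = ladd p (ladd p (ladd p (ladd p (ladd p (snd da) (snd db)) (snd dc))
        (map (\<lambda>a. 2 * a mod int p) dab)) (map (\<lambda>a. 2 * a mod int p) dac)) (map (\<lambda>a. 2 * a mod int p) dbc)"
    using sig[symmetric] unfolding Sigma_d_def padd_def twozero_def by simp
  hence "snd e ! k = ((((((snd da ! k + snd db ! k) mod int p + snd dc ! k) mod int p + 2 * dab ! k mod int p) mod int p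
      + 2 * dac ! k mod int p) mod int p) + 2 * dbc ! k mod int p) mod int p"
    using k len by (simp add: ladd_nth ladd_length)
  hence "snd e ! k mod int p = (snd da ! k + snd db ! k + snd dc ! k + 2 * dab ! k + 2 * dac ! k + 2 * dbc ! k) mod int p"
    by (simp add: mod_add_left_eq mod_add_right_eq)
  thus ?thesis by (simp add: mod_eq_dvd_iff)
qed

end


lemma dvd_eqI2: "(m::int) dvd u \<Longrightarrow> u = x \<Longrightarrow> m dvd x" by simp

lemma quad_equiv:
  fixes p :: nat and A B Cxy Xw Yw Xa Xb Xc Ya Yb Yc W Wa Wb Wc Aa Bb Cc Hab Hac Hbc a b c dab dac dbc E :: int
  assumes pr: "prime p" "odd p"
    and hW: "int p dvd W - E" and hE: "int p dvd E - (a + b + c + 2 * dab + 2 * dac + 2 * dbc)"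
    and ha: "int p dvd 2 * Wa + Aa" and hb: "int p dvd 2 * Wb + Bb" and hc: "int p dvd 2 * Wc + Cc"
    and hab: "int p dvd Hab" and hac: "int p dvd Hac" and hbc: "int p dvd Hbc"
  shows "(int p dvd A - a \<and> int p dvd A + 2 * Xa + Aa - a \<and> int p dvd B - b \<and> int p dvd B + 2 * Yb + Bb - b \<and>
          int p dvd W + A + B - 2 * Xw - 2 * Yw + 2 * Cxy - c \<and>
          int p dvd W + A + B - 2 * Xw - 2 * Yw + 2 * Cxy + 2 * Wc - 2 * Xc - 2 * Yc + Cc - c \<and>
          int p dvd Cxy - dab \<and> int p dvd Cxy + Xb - dab \<and> int p dvd Cxy + Ya - dab \<and> int p dvd Cxy + Xb + Ya + Hab - dab \<and>
          int p dvd Xw - A - Cxy - dac \<and> int p dvd Xw - A - Cxy + Xc - dac \<and>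
          int p dvd Xw - A - Cxy + Wa - Xa - Ya - dac \<and> int p dvd Xw - A - Cxy + Wa - Xa - Ya + Xc + Hac - dac \<and>
          int p dvd Yw - Cxy - B - dbc \<and> int p dvd Yw - Cxy - B + Yc - dbc \<and>
          int p dvd Yw - Cxy - B + Wb - Xb - Yb - dbc \<and> int p dvd Yw - Cxy - B + Wb - Xb - Yb + Yc + Hbc - dbc)
     \<longleftrightarrow>
         (int p dvd A - a \<and> int p dvd B - b \<and> int p dvd Cxy - dab \<and> int p dvd Xw - (dac + a + dab) \<and>
          int p dvd 2 * Xa + Aa \<and> int p dvd Xb \<and> int p dvd Xc \<and>
          int p dvd Yw - (dbc + b + dab) \<and> int p dvd 2 * Yb + Bb \<and> int p dvd Ya \<and> int p dvd Yc)"
    (is "?L \<longleftrightarrow> ?R")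
proof
  assume L: ?L
  hence k1: "int p dvd A - a" and k2: "int p dvd A + 2 * Xa + Aa - a" and k3: "int p dvd B - b"
    and k4: "int p dvd B + 2 * Yb + Bb - b"
    and k7: "int p dvd Cxy - dab" and k8: "int p dvd Cxy + Xb - dab" and k9: "int p dvd Cxy + Ya - dab"
    and k11: "int p dvd Xw - A - Cxy - dac" and k12: "int p dvd Xw - A - Cxy + Xc - dac"
    and k15: "int p dvd Yw - Cxy - B - dbc" and k16: "int p dvd Yw - Cxy - B + Yc - dbc"
    by auto
  show ?R
  proof (intro conjI)
    show "int p dvd A - a" by (rule k1)
    show "int p dvd B - b" by (rule k3)
    show "int p dvd Cxy - dab" by (rule k7)
    show "int p dvd Xw - (dac + a + dab)" by (rule dvd_eqI2[OF dvd_add[OF dvd_add[OF k11 k1] k7]]) linarith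
    show "int p dvd 2 * Xa + Aa" by (rule dvd_eqI2[OF dvd_diff[OF k2 k1]]) linarith
    show "int p dvd Xb" by (rule dvd_eqI2[OF dvd_diff[OF k8 k7]]) linarith
    show "int p dvd Xc" by (rule dvd_eqI2[OF dvd_diff[OF k12 k11]]) linarith
    show "int p dvd Yw - (dbc + b + dab)" by (rule dvd_eqI2[OF dvd_add[OF dvd_add[OF k15 k3] k7]]) linarith
    show "int p dvd 2 * Yb + Bb" by (rule dvd_eqI2[OF dvd_diff[OF k4 k3]]) linarith
    show "int p dvd Ya" by (rule dvd_eqI2[OF dvd_diff[OF k9 k7]]) linarith
    show "int p dvd Yc" by (rule dvd_eqI2[OF dvd_diff[OF k16 k15]]) linarith
  qed
next
  assume R: ?R
  hence r1: "int p dvd A - a" and r2: "int p dvd B - b" and r3: "int p dvd Cxy - dab"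
    and r4: "int p dvd Xw - (dac + a + dab)" and r5: "int p dvd 2 * Xa + Aa" and r6: "int p dvd Xb"
    and r7: "int p dvd Xc" and r8: "int p dvd Yw - (dbc + b + dab)" and r9: "int p dvd 2 * Yb + Bb"
    and r10: "int p dvd Ya" and r11: "int p dvd Yc"
    by auto
  have aux1: "int p dvd Wa - Xa"
  proof -
    have "int p dvd 2 * (Wa - Xa)" by (rule dvd_eqI2[OF dvd_diff[OF ha r5]]) (simp add: algebra_simps)
    thus ?thesis by (rule two_dvd_cancel[OF pr])
  qed
  have aux2: "int p dvd Wb - Yb"
  proof -
    have "int p dvd 2 * (Wb - Yb)" by (rule dvd_eqI2[OF dvd_diff[OF hb r9]]) (simp add: algebra_simps)
    thus ?thesis by (rule two_dvd_cancel[OF pr])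
  qed
  have k5: "int p dvd W + A + B - 2 * Xw - 2 * Yw + 2 * Cxy - c"
    by (rule dvd_eqI2[OF dvd_add[OF dvd_diff[OF dvd_diff[OF dvd_add[OF dvd_add[OF dvd_add[OF hW hE] r1] r2]
          dvd_mult[OF r4, of 2]] dvd_mult[OF r8, of 2]] dvd_mult[OF r3, of 2]]]) (simp add: algebra_simps)
  have k11: "int p dvd Xw - A - Cxy - dac" by (rule dvd_eqI2[OF dvd_diff[OF dvd_diff[OF r4 r1] r3]]) linarith
  have k13: "int p dvd Xw - A - Cxy + Wa - Xa - Ya - dac"
    by (rule dvd_eqI2[OF dvd_diff[OF dvd_add[OF k11 aux1] r10]]) linarith
  have k15: "int p dvd Yw - Cxy - B - dbc" by (rule dvd_eqI2[OF dvd_diff[OF dvd_diff[OF r8 r3] r2]]) linarith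
  have k17: "int p dvd Yw - Cxy - B + Wb - Xb - Yb - dbc"
    by (rule dvd_eqI2[OF dvd_diff[OF dvd_add[OF k15 aux2] r6]]) linarith
  show ?L
  proof (intro conjI)
    show "int p dvd A - a" by (rule r1)
    show "int p dvd A + 2 * Xa + Aa - a" by (rule dvd_eqI2[OF dvd_add[OF r1 r5]]) linarith
    show "int p dvd B - b" by (rule r2)
    show "int p dvd B + 2 * Yb + Bb - b" by (rule dvd_eqI2[OF dvd_add[OF r2 r9]]) linarith
    show "int p dvd W + A + B - 2 * Xw - 2 * Yw + 2 * Cxy - c" by (rule k5)
    show "int p dvd W + A + B - 2 * Xw - 2 * Yw + 2 * Cxy + 2 * Wc - 2 * Xc - 2 * Yc + Cc - c"
      by (rule dvd_eqI2[OF dvd_diff[OF dvd_diff[OF dvd_add[OF k5 hc] dvd_mult[OF r7, of 2]] dvd_mult[OF r11, of 2]]]) (simp add: algebra_simps)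
    show "int p dvd Cxy - dab" by (rule r3)
    show "int p dvd Cxy + Xb - dab" by (rule dvd_eqI2[OF dvd_add[OF r3 r6]]) linarith
    show "int p dvd Cxy + Ya - dab" by (rule dvd_eqI2[OF dvd_add[OF r3 r10]]) linarith
    show "int p dvd Cxy + Xb + Ya + Hab - dab" by (rule dvd_eqI2[OF dvd_add[OF dvd_add[OF dvd_add[OF r3 r6] r10] hab]]) linarith
    show "int p dvd Xw - A - Cxy - dac" by (rule k11)
    show "int p dvd Xw - A - Cxy + Xc - dac" by (rule dvd_eqI2[OF dvd_add[OF k11 r7]]) linarith
    show "int p dvd Xw - A - Cxy + Wa - Xa - Ya - dac" by (rule k13)
    show "int p dvd Xw - A - Cxy + Wa - Xa - Ya + Xc + Hac - dac" by (rule dvd_eqI2[OF dvd_add[OF dvd_add[OF k13 r7] hac]]) linarith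
    show "int p dvd Yw - Cxy - B - dbc" by (rule k15)
    show "int p dvd Yw - Cxy - B + Yc - dbc" by (rule dvd_eqI2[OF dvd_add[OF k15 r11]]) linarith
    show "int p dvd Yw - Cxy - B + Wb - Xb - Yb - dbc" by (rule k17)
    show "int p dvd Yw - Cxy - B + Wb - Xb - Yb + Yc + Hbc - dbc" by (rule dvd_eqI2[OF dvd_add[OF dvd_add[OF k17 r11] hbc]]) linarith
  qed
qed


context setting
begin

lemma quad18:
  fixes x y :: "nat \<Rightarrow> int"
  assumes k: "k < length Ms"
  defines "M \<equiv> Ms ! k"
  defines "a \<equiv> snd da ! k" and "b \<equiv> snd db ! k" and "c \<equiv> snd dc ! k"
    and "ab \<equiv> dab ! k" and "ac \<equiv> dac ! k" and "bc \<equiv> dbc ! k"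
  defines "X2 \<equiv> \<lambda>i. x i + ha i" and "Y2 \<equiv> \<lambda>i. y i + hb i" and "Z \<equiv> \<lambda>i. w i - x i - y i"
    and "Z2 \<equiv> \<lambda>i. w i - x i - y i + hc i"
  shows "(int p dvd qf n M x x - a \<and> int p dvd qf n M X2 X2 - a \<and> int p dvd qf n M y y - b \<and> int p dvd qf n M Y2 Y2 - b \<and>
          int p dvd qf n M Z Z - c \<and> int p dvd qf n M Z2 Z2 - c \<and>
          int p dvd qf n M x y - ab \<and> int p dvd qf n M x Y2 - ab \<and> int p dvd qf n M X2 y - ab \<and> int p dvd qf n M X2 Y2 - ab \<and>
          int p dvd qf n M x Z - ac \<and> int p dvd qf n M x Z2 - ac \<and> int p dvd qf n M X2 Z - ac \<and> int p dvd qf n M X2 Z2 - ac \<and>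
          int p dvd qf n M y Z - bc \<and> int p dvd qf n M y Z2 - bc \<and> int p dvd qf n M Y2 Z - bc \<and> int p dvd qf n M Y2 Z2 - bc)
     \<longleftrightarrow>
         (int p dvd qf n M x x - a \<and> int p dvd qf n M y y - b \<and> int p dvd qf n M x y - ab \<and>
          int p dvd qf n M x w - (ac + a + ab) \<and>
          int p dvd 2 * qf n M x ha + qf n M ha ha \<and> int p dvd qf n M x hb \<and> int p dvd qf n M x hc \<and>
          int p dvd qf n M y w - (bc + b + ab) \<and> int p dvd 2 * qf n M y hb + qf n M hb hb \<and>
          int p dvd qf n M y ha \<and> int p dvd qf n M y hc)"
proof -
  have sM: "symm M" unfolding M_def by (rule symM[OF k])
  have s: "qf n M ha x = qf n M x ha" "qf n M hb x = qf n M x hb" "qf n M hc x = qf n M x hc"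
    "qf n M w x = qf n M x w" "qf n M y x = qf n M x y"
    "qf n M ha y = qf n M y ha" "qf n M hb y = qf n M y hb" "qf n M hc y = qf n M y hc" "qf n M w y = qf n M y w"
    "qf n M ha w = qf n M w ha" "qf n M hb w = qf n M w hb" "qf n M hc w = qf n M w hc"
    "qf n M hb ha = qf n M ha hb" "qf n M hc ha = qf n M ha hc" "qf n M hc hb = qf n M hb hc"
    using qf_sym[OF sM] by auto
  note ex = qf_addL qf_addR qf_diffL qf_diffR s
  let ?A = "qf n M x x" and ?B = "qf n M y y" and ?C = "qf n M x y" and ?Xw = "qf n M x w" and ?Yw = "qf n M y w"
  let ?Xa = "qf n M x ha" and ?Xb = "qf n M x hb" and ?Xc = "qf n M x hc"
  let ?Ya = "qf n M y ha" and ?Yb = "qf n M y hb" and ?Yc = "qf n M y hc"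
  let ?W = "qf n M w w" and ?Wa = "qf n M w ha" and ?Wb = "qf n M w hb" and ?Wc = "qf n M w hc"
  let ?Aa = "qf n M ha ha" and ?Bb = "qf n M hb hb" and ?Cc = "qf n M hc hc"
  let ?Hab = "qf n M ha hb" and ?Hac = "qf n M ha hc" and ?Hbc = "qf n M hb hc"
  have e2: "qf n M X2 X2 = ?A + 2 * ?Xa + ?Aa" unfolding X2_def by (simp only: ex; linarith)
  have e4: "qf n M Y2 Y2 = ?B + 2 * ?Yb + ?Bb" unfolding Y2_def by (simp only: ex; linarith)
  have e5: "qf n M Z Z = ?W + ?A + ?B - 2 * ?Xw - 2 * ?Yw + 2 * ?C" unfolding Z_def by (simp only: ex; linarith)
  have e6: "qf n M Z2 Z2 = ?W + ?A + ?B - 2 * ?Xw - 2 * ?Yw + 2 * ?C + 2 * ?Wc - 2 * ?Xc - 2 * ?Yc + ?Cc"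
    unfolding Z2_def by (simp only: ex; linarith)
  have e8: "qf n M x Y2 = ?C + ?Xb" unfolding Y2_def by (simp only: ex; linarith)
  have e9: "qf n M X2 y = ?C + ?Ya" unfolding X2_def by (simp only: ex; linarith)
  have e10: "qf n M X2 Y2 = ?C + ?Xb + ?Ya + ?Hab" unfolding X2_def Y2_def by (simp only: ex; linarith)
  have e11: "qf n M x Z = ?Xw - ?A - ?C" unfolding Z_def by (simp only: ex; linarith)
  have e12: "qf n M x Z2 = ?Xw - ?A - ?C + ?Xc" unfolding Z2_def by (simp only: ex; linarith)
  have e13: "qf n M X2 Z = ?Xw - ?A - ?C + ?Wa - ?Xa - ?Ya" unfolding X2_def Z_def by (simp only: ex; linarith)
  have e14: "qf n M X2 Z2 = ?Xw - ?A - ?C + ?Wa - ?Xa - ?Ya + ?Xc + ?Hac" unfolding X2_def Z2_def by (simp only: ex; linarith)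
  have e15: "qf n M y Z = ?Yw - ?C - ?B" unfolding Z_def by (simp only: ex; linarith)
  have e16: "qf n M y Z2 = ?Yw - ?C - ?B + ?Yc" unfolding Z2_def by (simp only: ex; linarith)
  have e17: "qf n M Y2 Z = ?Yw - ?C - ?B + ?Wb - ?Xb - ?Yb" unfolding Y2_def Z_def by (simp only: ex; linarith)
  have e18: "qf n M Y2 Z2 = ?Yw - ?C - ?B + ?Wb - ?Xb - ?Yb + ?Yc + ?Hbc" unfolding Y2_def Z2_def by (simp only: ex; linarith)
  have W: "int p dvd ?W - snd e ! k" and ha': "int p dvd 2 * ?Wa + ?Aa" and hb': "int p dvd 2 * ?Wb + ?Bb"
    and hc': "int p dvd 2 * ?Wc + ?Cc" and hab: "int p dvd ?Hab" and hac: "int p dvd ?Hac" and hbc: "int p dvd ?Hbc"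
    using omQ[OF k] unfolding M_def by auto
  have E: "int p dvd snd e ! k - (a + b + c + 2 * ab + 2 * ac + 2 * bc)"
    using sigQ[OF k] unfolding a_def b_def c_def ab_def ac_def bc_def .
  show ?thesis unfolding e2 e4 e5 e6 e8 e9 e10 e11 e12 e13 e14 e15 e16 e17 e18
    by (rule quad_equiv[OF prime odd W E ha' hb' hc' hab hac hbc])
qed

end


definition LLd :: "nat \<Rightarrow> nat \<Rightarrow> (nat \<Rightarrow> int) list \<Rightarrow> (nat \<Rightarrow> int) \<Rightarrow> int list \<times> int list \<Rightarrow> bool" where
  "LLd p n Ls v d \<longleftrightarrow> (\<forall>j<length Ls. int p dvd lf n (Ls ! j) v - fst d ! j)"

definition QQd :: "nat \<Rightarrow> nat \<Rightarrow> (nat \<Rightarrow> nat \<Rightarrow> int) list \<Rightarrow> (nat \<Rightarrow> int) \<Rightarrow> (nat \<Rightarrow> int) \<Rightarrow> int list \<Rightarrow> bool" where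
  "QQd p n Ms u v tg \<longleftrightarrow> (\<forall>k<length Ms. int p dvd qf n (Ms ! k) u v - tg ! k)"

lemma betaB_iff:
  assumes "p > 0" "fvec p (length Ls) (fst d)" "fvec p (length Ms) (snd d)"
  shows "betaB p n Ls Ms v = d \<longleftrightarrow> LLd p n Ls v d \<and> QQd p n Ms v v (snd d)"
proof -
  have "betaB p n Ls Ms v = d \<longleftrightarrow> betaL p n Ls v = fst d \<and> betaQ p n Ms v v = snd d"
    unfolding betaB_def by (cases d) auto
  thus ?thesis unfolding betaL_eq betaQ_eq map_eq_dvd[OF assms(2,1)] map_eq_dvd[OF assms(3,1)]
      LLd_def QQd_def by simp
qed

lemma betaQ_iff:
  assumes "p > 0" "fvec p (length Ms) tg"
  shows "betaQ p n Ms u v = tg \<longleftrightarrow> QQd p n Ms u v tg"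
  unfolding betaQ_eq map_eq_dvd[OF assms(2,1)] QQd_def by simp

lemma LLd_ceq: "ceq p n v v' \<Longrightarrow> LLd p n Ls v d = LLd p n Ls v' d"
  unfolding LLd_def using lf_ceq_dvd by blast

lemma QQd_ceqL: "ceq p n u u' \<Longrightarrow> QQd p n Ms u v tg = QQd p n Ms u' v tg"
  unfolding QQd_def using qf_ceq_dvd[OF _ ceq_refl] by blast

lemma QQd_ceqR: "ceq p n v v' \<Longrightarrow> QQd p n Ms u v tg = QQd p n Ms u v' tg"
  unfolding QQd_def using qf_ceq_dvd[OF ceq_refl] by blast

definition tup :: "nat \<Rightarrow> (nat \<Rightarrow> int) \<Rightarrow> (nat \<Rightarrow> int) \<Rightarrow> (nat \<Rightarrow> int) \<Rightarrow> (nat \<Rightarrow> int) \<Rightarrow> (nat \<Rightarrow> int) \<Rightarrow> (nat \<Rightarrow> int) \<Rightarrow> vec6" where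
  "tup p w ha hb hc x y = (x, vadd p x ha, y, vadd p y hb, vsub p (vsub p w x) y, vadd p (vsub p (vsub p w x) y) hc)"

context setting
begin

definition red2 :: "(nat \<Rightarrow> int) \<Rightarrow> (nat \<Rightarrow> int) \<Rightarrow> bool" where
  "red2 x y \<longleftrightarrow> LLd p n Ls x da \<and> LLd p n Ls y db \<and>
    (\<forall>k<length Ms. int p dvd qf n (Ms ! k) x x - snd da ! k \<and> int p dvd qf n (Ms ! k) y y - snd db ! k \<and>
          int p dvd qf n (Ms ! k) x y - dab ! k \<and>
          int p dvd qf n (Ms ! k) x w - (dac ! k + snd da ! k + dab ! k) \<and>
          int p dvd 2 * qf n (Ms ! k) x ha + qf n (Ms ! k) ha ha \<and> int p dvd qf n (Ms ! k) x hb \<and> int p dvd qf n (Ms ! k) x hc \<and>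
          int p dvd qf n (Ms ! k) y w - (dbc ! k + snd db ! k + dab ! k) \<and> int p dvd 2 * qf n (Ms ! k) y hb + qf n (Ms ! k) hb hb \<and>
          int p dvd qf n (Ms ! k) y ha \<and> int p dvd qf n (Ms ! k) y hc)"

lemma LL6:
  "(LLd p n Ls x da \<and> LLd p n Ls (\<lambda>i. x i + ha i) da \<and> LLd p n Ls y db \<and> LLd p n Ls (\<lambda>i. y i + hb i) db \<and>
    LLd p n Ls (\<lambda>i. w i - x i - y i) dc \<and> LLd p n Ls (\<lambda>i. w i - x i - y i + hc i) dc)
   \<longleftrightarrow> LLd p n Ls x da \<and> LLd p n Ls y db"
proof
  assume "LLd p n Ls x da \<and> LLd p n Ls y db"
  hence lx: "\<And>j. j < length Ls \<Longrightarrow> int p dvd lf n (Ls ! j) x - fst da ! j"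
    and ly: "\<And>j. j < length Ls \<Longrightarrow> int p dvd lf n (Ls ! j) y - fst db ! j" unfolding LLd_def by auto
  have lz: "int p dvd lf n (Ls ! j) (\<lambda>i. w i - x i - y i) - fst dc ! j" if j: "j < length Ls" for j
    by (rule dvd_eqI2[OF dvd_diff[OF dvd_diff[OF dvd_add[OF omL(1)[OF j] sigL[OF j]] lx[OF j]] ly[OF j]]])
       (simp add: lf_diffV)
  show "LLd p n Ls x da \<and> LLd p n Ls (\<lambda>i. x i + ha i) da \<and> LLd p n Ls y db \<and> LLd p n Ls (\<lambda>i. y i + hb i) db \<and>
    LLd p n Ls (\<lambda>i. w i - x i - y i) dc \<and> LLd p n Ls (\<lambda>i. w i - x i - y i + hc i) dc"
    unfolding LLd_def
  proof (intro conjI allI impI)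
    fix j assume j: "j < length Ls"
    show "int p dvd lf n (Ls ! j) x - fst da ! j" by (rule lx[OF j])
    show "int p dvd lf n (Ls ! j) y - fst db ! j" by (rule ly[OF j])
    show "int p dvd lf n (Ls ! j) (\<lambda>i. w i - x i - y i) - fst dc ! j" by (rule lz[OF j])
    show "int p dvd lf n (Ls ! j) (\<lambda>i. x i + ha i) - fst da ! j"
      by (rule dvd_eqI2[OF dvd_add[OF lx[OF j] omL(2)[OF j]]]) (simp add: lf_addV)
    show "int p dvd lf n (Ls ! j) (\<lambda>i. y i + hb i) - fst db ! j"
      by (rule dvd_eqI2[OF dvd_add[OF ly[OF j] omL(3)[OF j]]]) (simp add: lf_addV)
    show "int p dvd lf n (Ls ! j) (\<lambda>i. w i - x i - y i + hc i) - fst dc ! j"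
      by (rule dvd_eqI2[OF dvd_add[OF lz[OF j] omL(4)[OF j]]]) (simp add: lf_addV)
  qed
qed auto

lemma tup_K222:
  assumes x: "x \<in> vecs p n" and y: "y \<in> vecs p n"
  shows "tup p w ha hb hc x y \<in> K222 p n Ls Ms (da, db, dc, dab, dac, dbc) \<longleftrightarrow> red2 x y"
proof -
  let ?X2 = "\<lambda>i. x i + ha i" and ?Y2 = "\<lambda>i. y i + hb i" and ?Z = "\<lambda>i. w i - x i - y i"
    and ?Z2 = "\<lambda>i. w i - x i - y i + hc i"
  let ?x2 = "vadd p x ha" and ?y2 = "vadd p y hb" and ?z = "vsub p (vsub p w x) y" and ?z2 = "vadd p (vsub p (vsub p w x) y) hc"
  have cX2: "ceq p n ?x2 ?X2" by (rule ceq_vadd)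
  have cY2: "ceq p n ?y2 ?Y2" by (rule ceq_vadd)
  have cZ: "ceq p n ?z ?Z" by (rule ceq_vsub'[OF ceq_vsub ceq_refl])
  have cZ2: "ceq p n ?z2 ?Z2" by (rule ceq_vadd'[OF cZ ceq_refl])
  have vs: "?x2 \<in> vecs p n" "?y2 \<in> vecs p n" "?z \<in> vecs p n" "?z2 \<in> vecs p n"
    using x y wv p0 by (simp_all add: vadd_vecs vsub_vecs)
  note bB = betaB_iff[OF p0 fda] betaB_iff[OF p0 fdb] betaB_iff[OF p0 fdc]
  note bQ = betaQ_iff[OF p0 fdab] betaQ_iff[OF p0 fdac] betaQ_iff[OF p0 fdbc]
  note cq = LLd_ceq[OF cX2] LLd_ceq[OF cY2] LLd_ceq[OF cZ] LLd_ceq[OF cZ2]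
    QQd_ceqL[OF cX2] QQd_ceqL[OF cY2] QQd_ceqL[OF cZ] QQd_ceqL[OF cZ2]
    QQd_ceqR[OF cX2] QQd_ceqR[OF cY2] QQd_ceqR[OF cZ] QQd_ceqR[OF cZ2]
  have "tup p w ha hb hc x y \<in> K222 p n Ls Ms (da, db, dc, dab, dac, dbc) \<longleftrightarrow>
     (LLd p n Ls x da \<and> LLd p n Ls ?X2 da \<and> LLd p n Ls y db \<and> LLd p n Ls ?Y2 db \<and>
      LLd p n Ls ?Z dc \<and> LLd p n Ls ?Z2 dc) \<and>
     (QQd p n Ms x x (snd da) \<and> QQd p n Ms ?X2 ?X2 (snd da) \<and> QQd p n Ms y y (snd db) \<and> QQd p n Ms ?Y2 ?Y2 (snd db) \<and>
      QQd p n Ms ?Z ?Z (snd dc) \<and> QQd p n Ms ?Z2 ?Z2 (snd dc) \<and>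
      QQd p n Ms x y dab \<and> QQd p n Ms x ?Y2 dab \<and> QQd p n Ms ?X2 y dab \<and> QQd p n Ms ?X2 ?Y2 dab \<and>
      QQd p n Ms x ?Z dac \<and> QQd p n Ms x ?Z2 dac \<and> QQd p n Ms ?X2 ?Z dac \<and> QQd p n Ms ?X2 ?Z2 dac \<and>
      QQd p n Ms y ?Z dbc \<and> QQd p n Ms y ?Z2 dbc \<and> QQd p n Ms ?Y2 ?Z dbc \<and> QQd p n Ms ?Y2 ?Z2 dbc)"
    unfolding K222_def tup_def using x y vs
    by (simp only: mem_Collect_eq prod.case ball_simps bB bQ cq simp_thms insert_iff empty_iff) blast
  also have "\<dots> \<longleftrightarrow> red2 x y"
  proof -
    let ?P18 = "\<lambda>k. int p dvd qf n (Ms ! k) x x - snd da ! k \<and> int p dvd qf n (Ms ! k) ?X2 ?X2 - snd da ! k \<and>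
          int p dvd qf n (Ms ! k) y y - snd db ! k \<and> int p dvd qf n (Ms ! k) ?Y2 ?Y2 - snd db ! k \<and>
          int p dvd qf n (Ms ! k) ?Z ?Z - snd dc ! k \<and> int p dvd qf n (Ms ! k) ?Z2 ?Z2 - snd dc ! k \<and>
          int p dvd qf n (Ms ! k) x y - dab ! k \<and> int p dvd qf n (Ms ! k) x ?Y2 - dab ! k \<and>
          int p dvd qf n (Ms ! k) ?X2 y - dab ! k \<and> int p dvd qf n (Ms ! k) ?X2 ?Y2 - dab ! k \<and>
          int p dvd qf n (Ms ! k) x ?Z - dac ! k \<and> int p dvd qf n (Ms ! k) x ?Z2 - dac ! k \<and>
          int p dvd qf n (Ms ! k) ?X2 ?Z - dac ! k \<and> int p dvd qf n (Ms ! k) ?X2 ?Z2 - dac ! k \<and>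
          int p dvd qf n (Ms ! k) y ?Z - dbc ! k \<and> int p dvd qf n (Ms ! k) y ?Z2 - dbc ! k \<and>
          int p dvd qf n (Ms ! k) ?Y2 ?Z - dbc ! k \<and> int p dvd qf n (Ms ! k) ?Y2 ?Z2 - dbc ! k"
    have Q: "(QQd p n Ms x x (snd da) \<and> QQd p n Ms ?X2 ?X2 (snd da) \<and> QQd p n Ms y y (snd db) \<and> QQd p n Ms ?Y2 ?Y2 (snd db) \<and>
      QQd p n Ms ?Z ?Z (snd dc) \<and> QQd p n Ms ?Z2 ?Z2 (snd dc) \<and>
      QQd p n Ms x y dab \<and> QQd p n Ms x ?Y2 dab \<and> QQd p n Ms ?X2 y dab \<and> QQd p n Ms ?X2 ?Y2 dab \<and>
      QQd p n Ms x ?Z dac \<and> QQd p n Ms x ?Z2 dac \<and> QQd p n Ms ?X2 ?Z dac \<and> QQd p n Ms ?X2 ?Z2 dac \<and>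
      QQd p n Ms y ?Z dbc \<and> QQd p n Ms y ?Z2 dbc \<and> QQd p n Ms ?Y2 ?Z dbc \<and> QQd p n Ms ?Y2 ?Z2 dbc)
      \<longleftrightarrow> (\<forall>k<length Ms. ?P18 k)"
      unfolding QQd_def by (simp only: imp_conjR all_conj_distrib)
    have q18: "\<And>k. k < length Ms \<Longrightarrow> ?P18 k \<longleftrightarrow> (int p dvd qf n (Ms ! k) x x - snd da ! k \<and> int p dvd qf n (Ms ! k) y y - snd db ! k \<and>
          int p dvd qf n (Ms ! k) x y - dab ! k \<and>
          int p dvd qf n (Ms ! k) x w - (dac ! k + snd da ! k + dab ! k) \<and>
          int p dvd 2 * qf n (Ms ! k) x ha + qf n (Ms ! k) ha ha \<and> int p dvd qf n (Ms ! k) x hb \<and> int p dvd qf n (Ms ! k) x hc \<and>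
          int p dvd qf n (Ms ! k) y w - (dbc ! k + snd db ! k + dab ! k) \<and> int p dvd 2 * qf n (Ms ! k) y hb + qf n (Ms ! k) hb hb \<and>
          int p dvd qf n (Ms ! k) y ha \<and> int p dvd qf n (Ms ! k) y hc)"
      by (rule quad18)
    show ?thesis unfolding LL6 Q red2_def using q18 by simp
  qed
  finally show ?thesis .
qed

end


context setting
begin

lemma Psi_tup:
  assumes x: "x \<in> vecs p n" and y: "y \<in> vecs p n"
  shows "Psi p (tup p w ha hb hc x y) = (w, ha, hb, hc)"
proof -
  let ?z = "vsub p (vsub p w x) y"
  have vz: "?z \<in> vecs p n" using x y wv p0 by (simp add: vsub_vecs)
  have 1: "vadd p (vadd p x y) ?z = w"
  proof (rule vecs_eq_mod)
    show "vadd p (vadd p x y) ?z \<in> vecs p n" using x y vz p0 by (simp add: vadd_vecs)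
    show "w \<in> vecs p n" by (rule wv)
    have "ceq p n (vadd p (vadd p x y) ?z) (\<lambda>i. (x i + y i) + ((w i - x i) - y i))"
      by (intro ceq_vadd' ceq_vsub' ceq_refl)
    thus "ceq p n (vadd p (vadd p x y) ?z) w" by simp
  qed
  have 2: "vsub p (vadd p u h) u = h" if "u \<in> vecs p n" "h \<in> vecs p n" for u h
  proof (rule vecs_eq_mod)
    show "vsub p (vadd p u h) u \<in> vecs p n" using that p0 by (simp add: vadd_vecs vsub_vecs)
    show "h \<in> vecs p n" by (rule that)
    have "ceq p n (vsub p (vadd p u h) u) (\<lambda>i. (u i + h i) - u i)"
      by (intro ceq_vadd' ceq_vsub' ceq_refl)
    thus "ceq p n (vsub p (vadd p u h) u) h" by simp
  qed
  show ?thesis unfolding tup_def Psi_def using 1 2[OF x wv(2)] 2[OF y wv(3)] 2[OF vz wv(4)] by simp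
qed

lemma Psi_inv:
  assumes t: "t \<in> {t. Psi p t = (w, ha, hb, hc)} \<inter> K222 p n Ls Ms (da, db, dc, dab, dac, dbc)"
  shows "fst t \<in> vecs p n" "fst (snd (snd t)) \<in> vecs p n"
    "t = tup p w ha hb hc (fst t) (fst (snd (snd t)))"
proof -
  obtain x1 x2 y1 y2 z1 z2 where teq: "t = (x1, x2, y1, y2, z1, z2)" by (cases t) auto
  have v: "x1 \<in> vecs p n" "x2 \<in> vecs p n" "y1 \<in> vecs p n" "y2 \<in> vecs p n" "z1 \<in> vecs p n" "z2 \<in> vecs p n"
    using t unfolding teq K222_def by auto
  have ps: "vadd p (vadd p x1 y1) z1 = w" "vsub p x2 x1 = ha" "vsub p y2 y1 = hb" "vsub p z2 z1 = hc"
    using t unfolding teq Psi_def by auto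
  show "fst t \<in> vecs p n" "fst (snd (snd t)) \<in> vecs p n" using v teq by auto
  have a: "u2 = vadd p u1 h" if "u1 \<in> vecs p n" "u2 \<in> vecs p n" "vsub p u2 u1 = h" for u1 u2 h
  proof (rule vecs_eq_mod[OF that(2)])
    show "vadd p u1 h \<in> vecs p n" using that p0 by (metis vadd_vecs vsub_vecs)
    have "ceq p n (vadd p u1 h) (\<lambda>i. u1 i + (u2 i - u1 i))"
      unfolding that(3)[symmetric] by (intro ceq_vadd' ceq_vsub' ceq_refl)
    thus "ceq p n u2 (vadd p u1 h)" by (simp add: ceq_sym)
  qed
  have z: "z1 = vsub p (vsub p w x1) y1"
  proof (rule vecs_eq_mod[OF v(5)])
    show "vsub p (vsub p w x1) y1 \<in> vecs p n" using v wv p0 by (simp add: vsub_vecs)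
    have "ceq p n (vsub p (vsub p w x1) y1) (\<lambda>i. (x1 i + y1 i + z1 i) - x1 i - y1 i)"
      unfolding ps(1)[symmetric] by (intro ceq_vadd' ceq_vsub' ceq_refl)
    thus "ceq p n z1 (vsub p (vsub p w x1) y1)" by (simp add: ceq_sym)
  qed
  show "t = tup p w ha hb hc (fst t) (fst (snd (snd t)))"
    unfolding teq tup_def using a[OF v(1,2) ps(2)] a[OF v(3,4) ps(3)] a[OF v(5,6) ps(4)] z by simp
qed

lemma S_card:
  "card ({t. Psi p t = (w, ha, hb, hc)} \<inter> K222 p n Ls Ms (da, db, dc, dab, dac, dbc))
   = card {z \<in> vecs p n \<times> vecs p n. red2 (fst z) (snd z)}"
proof -
  let ?S = "{t. Psi p t = (w, ha, hb, hc)} \<inter> K222 p n Ls Ms (da, db, dc, dab, dac, dbc)"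
  let ?R = "{z \<in> vecs p n \<times> vecs p n. red2 (fst z) (snd z)}"
  let ?g = "\<lambda>z. tup p w ha hb hc (fst z) (snd z)"
  have inj: "inj_on ?g ?R" by (rule inj_onI) (auto simp: tup_def prod_eq_iff)
  have "?S = ?g ` ?R"
  proof
    show "?S \<subseteq> ?g ` ?R"
    proof
      fix t assume t: "t \<in> ?S"
      let ?z = "(fst t, fst (snd (snd t)))"
      have "t = ?g ?z" using Psi_inv(3)[OF t] by simp
      moreover have "?z \<in> ?R"
        using Psi_inv[OF t] t tup_K222[OF Psi_inv(1,2)[OF t]] by auto
      ultimately show "t \<in> ?g ` ?R" by blast
    qed
    show "?g ` ?R \<subseteq> ?S"
    proof
      fix t assume "t \<in> ?g ` ?R"
      then obtain z where z: "z \<in> ?R" "t = ?g z" by blast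
      have "fst z \<in> vecs p n" "snd z \<in> vecs p n" "red2 (fst z) (snd z)" using z(1) by auto
      thus "t \<in> ?S" using z(2) Psi_tup tup_K222 by auto
    qed
  qed
  thus ?thesis using card_image[OF inj] by simp
qed

end


lemma nth_concat4:
  assumes "\<And>M. length (f M) = 4"
  shows "k < length xs \<Longrightarrow> s < 4 \<Longrightarrow> concat (map f xs) ! (4 * k + s) = f (xs ! k) ! s"
proof (induction xs arbitrary: k)
  case Nil thus ?case by simp
next
  case (Cons a xs)
  show ?case
  proof (cases k)
    case 0
    thus ?thesis using Cons.prems assms by (simp add: nth_append)
  next
    case (Suc k')
    have "concat (map f (a # xs)) ! (4 * k + s) = concat (map f xs) ! (4 * k' + s)"
      using Suc assms by (simp add: nth_append)
    thus ?thesis using Cons Suc by simp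
  qed
qed

lemma length_concat4:
  assumes "\<And>M. length (f M) = 4"
  shows "length (concat (map f xs)) = 4 * length xs"
  using assms by (induction xs) auto

lemma all_split4:
  fixes l q :: nat
  shows "(\<forall>j<l + 4 * q. P j) \<longleftrightarrow> (\<forall>j<l. P j) \<and> (\<forall>k<q. P (l + 4 * k) \<and> P (l + 4 * k + 1) \<and> P (l + 4 * k + 2) \<and> P (l + 4 * k + 3))"
proof
  assume "\<forall>j<l + 4 * q. P j"
  thus "(\<forall>j<l. P j) \<and> (\<forall>k<q. P (l + 4 * k) \<and> P (l + 4 * k + 1) \<and> P (l + 4 * k + 2) \<and> P (l + 4 * k + 3))"
    by auto
next
  assume a: "(\<forall>j<l. P j) \<and> (\<forall>k<q. P (l + 4 * k) \<and> P (l + 4 * k + 1) \<and> P (l + 4 * k + 2) \<and> P (l + 4 * k + 3))"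
  show "\<forall>j<l + 4 * q. P j"
  proof (intro allI impI)
    fix j assume j: "j < l + 4 * q"
    show "P j"
    proof (cases "j < l")
      case True thus ?thesis using a by blast
    next
      case False
      define k where "k = (j - l) div 4"
      define s where "s = (j - l) mod 4"
      have js: "j = l + 4 * k + s" using False unfolding k_def s_def by simp
      have kq: "k < q" using j False unfolding k_def by linarith
      have "s < 4" unfolding s_def by simp
      hence "s = 0 \<or> s = 1 \<or> s = 2 \<or> s = 3" by linarith
      thus ?thesis using a kq js by auto
    qed
  qed
qed

lemma mvec_sum:
  "(\<Sum>i<n. (mvec p n M v) i * x i) mod int p = qf n M x v mod int p"
proof -
  have "(\<Sum>i<n. (mvec p n M v) i * x i) mod int p = (\<Sum>i<n. (\<Sum>j<n. M i j * v j) * x i) mod int p"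
    by (intro sum_mod_cong) (simp add: mvec_def mod_mult_left_eq)
  also have "(\<Sum>i<n. (\<Sum>j<n. M i j * v j) * x i) = qf n M x v"
    unfolding qf_def by (rule sum.cong[OF refl]) (simp add: sum_distrib_right sum_distrib_left mult_ac)
  finally show ?thesis .
qed

lemma dvd_add_mod: "a mod m = a' mod m \<Longrightarrow> ((m::int) dvd a + c \<longleftrightarrow> m dvd a' + c)"
  by (metis mod_add_cong mod_eq_0_iff_dvd mod_mod_trivial)

context setting
begin

definition tt :: int where "tt = (int p + 1) div 2"

lemma tt2: "2 * tt = int p + 1"
proof -
  have "odd (int p)" using odd by simp
  hence "even (int p + 1)" by simp
  thus ?thesis unfolding tt_def by (metis dvd_mult_div_cancel)
qed

lemma t_iff: "int p dvd X + tt * Y \<longleftrightarrow> int p dvd 2 * X + Y"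
proof -
  have eq: "2 * (X + tt * Y) = (2 * X + Y) + int p * Y"
  proof -
    have "2 * (X + tt * Y) = 2 * X + (2 * tt) * Y" by (simp add: algebra_simps)
    also have "\<dots> = (2 * X + Y) + int p * Y" unfolding tt2 by (simp add: algebra_simps)
    finally show ?thesis .
  qed
  have d: "int p dvd int p * Y" by simp
  show ?thesis
  proof
    assume "int p dvd X + tt * Y"
    hence "int p dvd 2 * (X + tt * Y)" by (rule dvd_mult)
    thus "int p dvd 2 * X + Y" unfolding eq using dvd_add_left_iff[OF d] by blast
  next
    assume "int p dvd 2 * X + Y"
    hence "int p dvd 2 * (X + tt * Y)" unfolding eq using d by (rule dvd_add)
    thus "int p dvd X + tt * Y" by (rule two_dvd_cancel[OF prime odd])
  qed
qed

definition vsL :: "(nat \<Rightarrow> int) list" where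
  "vsL = Ls @ concat (map (\<lambda>M. [mvec p n M w, mvec p n M ha, mvec p n M hb, mvec p n M hc]) Ms)"

lemma vsL_len: "length vsL = length Ls + 4 * length Ms"
  unfolding vsL_def by (simp add: length_concat4)

lemma vsL_L: "j < length Ls \<Longrightarrow> vsL ! j = Ls ! j"
  unfolding vsL_def by (simp add: nth_append)

lemma vsL_Q:
  assumes "k < length Ms" "s < 4"
  shows "vsL ! (length Ls + 4 * k + s) = [mvec p n (Ms ! k) w, mvec p n (Ms ! k) ha, mvec p n (Ms ! k) hb, mvec p n (Ms ! k) hc] ! s"
proof -
  have "vsL ! (length Ls + 4 * k + s) = concat (map (\<lambda>M. [mvec p n M w, mvec p n M ha, mvec p n M hb, mvec p n M hc]) Ms) ! (4 * k + s)"
    unfolding vsL_def by (simp add: nth_append add.assoc)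
  also have "\<dots> = [mvec p n (Ms ! k) w, mvec p n (Ms ! k) ha, mvec p n (Ms ! k) hb, mvec p n (Ms ! k) hc] ! s"
    by (rule nth_concat4) (use assms in simp_all)
  finally show ?thesis .
qed

definition bx2 :: "nat \<Rightarrow> int" where
  "bx2 j = (if j < length Ls then - (fst da ! j) else
     (let k = (j - length Ls) div 4; s = (j - length Ls) mod 4 in
       if s = 0 then - (dac ! k + snd da ! k + dab ! k) else if s = 1 then tt * qf n (Ms ! k) ha ha else 0))"

definition by2 :: "nat \<Rightarrow> int" where
  "by2 j = (if j < length Ls then - (fst db ! j) else
     (let k = (j - length Ls) div 4; s = (j - length Ls) mod 4 in
       if s = 0 then - (dbc ! k + snd db ! k + dab ! k) else if s = 2 then tt * qf n (Ms ! k) hb hb else 0))"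

lemma divmod4: fixes l k s :: nat shows "s < 4 \<Longrightarrow> (l + 4 * k + s - l) div 4 = k" "s < 4 \<Longrightarrow> (l + 4 * k + s - l) mod 4 = s"
  by simp_all

lemma X2_char:
  "(\<forall>j<length vsL. int p dvd (\<Sum>i<n. (vsL ! j) i * x i) + bx2 j) \<longleftrightarrow>
   LLd p n Ls x da \<and> (\<forall>k<length Ms. int p dvd qf n (Ms ! k) x w - (dac ! k + snd da ! k + dab ! k) \<and>
      int p dvd 2 * qf n (Ms ! k) x ha + qf n (Ms ! k) ha ha \<and> int p dvd qf n (Ms ! k) x hb \<and> int p dvd qf n (Ms ! k) x hc)"
proof -
  let ?l = "length Ls"
  have L: "(\<forall>j<?l. int p dvd (\<Sum>i<n. (vsL ! j) i * x i) + bx2 j) \<longleftrightarrow> LLd p n Ls x da"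
    unfolding LLd_def lf_def by (simp add: vsL_L bx2_def)
  have Q: "(int p dvd (\<Sum>i<n. (vsL ! (?l + 4 * k + s)) i * x i) + bx2 (?l + 4 * k + s)) \<longleftrightarrow>
     (if s = 0 then int p dvd qf n (Ms ! k) x w - (dac ! k + snd da ! k + dab ! k)
      else if s = 1 then int p dvd 2 * qf n (Ms ! k) x ha + qf n (Ms ! k) ha ha
      else if s = 2 then int p dvd qf n (Ms ! k) x hb else int p dvd qf n (Ms ! k) x hc)"
    if k: "k < length Ms" and s: "s < 4" for k s
  proof -
    have b: "bx2 (?l + 4 * k + s) = (if s = 0 then - (dac ! k + snd da ! k + dab ! k) else if s = 1 then tt * qf n (Ms ! k) ha ha else 0)"
    proof -
      have e1: "\<not> (?l + 4 * k + s < ?l)" by simp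
      have e2: "?l + 4 * k + s - ?l = 4 * k + s" by simp
      have d: "(4 * k + s) div 4 = k" "(4 * k + s) mod 4 = s" using s by auto
      show ?thesis by (simp only: bx2_def Let_def e1 e2 d if_False)
    qed
    have s4: "s = 0 \<or> s = 1 \<or> s = 2 \<or> s = 3" using s by linarith
    have m: "\<And>v c. int p dvd (\<Sum>i<n. mvec p n (Ms ! k) v i * x i) + c \<longleftrightarrow> int p dvd qf n (Ms ! k) x v + c"
      by (rule dvd_add_mod[OF mvec_sum])
    from s4 show ?thesis
    proof (elim disjE)
      assume s0: "s = 0"
      show ?thesis unfolding vsL_Q[OF k s] b using s0 m[of w "- (dac ! k + snd da ! k + dab ! k)"] by (simp add: algebra_simps)
    next
      assume s1: "s = 1"
      show ?thesis unfolding vsL_Q[OF k s] b using s1 m[of ha "tt * qf n (Ms ! k) ha ha"] t_iff by simp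
    next
      assume s2: "s = 2"
      show ?thesis unfolding vsL_Q[OF k s] b using s2 m[of hb "0"] by simp
    next
      assume s3: "s = 3"
      show ?thesis unfolding vsL_Q[OF k s] b using s3 m[of hc "0"] by simp
    qed
  qed
  have "(\<forall>j<length vsL. int p dvd (\<Sum>i<n. (vsL ! j) i * x i) + bx2 j) \<longleftrightarrow>
     (\<forall>j<?l. int p dvd (\<Sum>i<n. (vsL ! j) i * x i) + bx2 j) \<and>
     (\<forall>k<length Ms. (int p dvd (\<Sum>i<n. (vsL ! (?l + 4 * k)) i * x i) + bx2 (?l + 4 * k)) \<and>
        (int p dvd (\<Sum>i<n. (vsL ! (?l + 4 * k + 1)) i * x i) + bx2 (?l + 4 * k + 1)) \<and>
        (int p dvd (\<Sum>i<n. (vsL ! (?l + 4 * k + 2)) i * x i) + bx2 (?l + 4 * k + 2)) \<and>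
        (int p dvd (\<Sum>i<n. (vsL ! (?l + 4 * k + 3)) i * x i) + bx2 (?l + 4 * k + 3)))"
    unfolding vsL_len by (rule all_split4)
  also have "\<dots> \<longleftrightarrow> LLd p n Ls x da \<and> (\<forall>k<length Ms. int p dvd qf n (Ms ! k) x w - (dac ! k + snd da ! k + dab ! k) \<and>
      int p dvd 2 * qf n (Ms ! k) x ha + qf n (Ms ! k) ha ha \<and> int p dvd qf n (Ms ! k) x hb \<and> int p dvd qf n (Ms ! k) x hc)"
    unfolding L using Q[of _ 0] Q[of _ 1] Q[of _ 2] Q[of _ 3] by simp
  finally show ?thesis .
qed

lemma Y2_char:
  "(\<forall>j<length vsL. int p dvd (\<Sum>i<n. (vsL ! j) i * y i) + by2 j) \<longleftrightarrow>
   LLd p n Ls y db \<and> (\<forall>k<length Ms. int p dvd qf n (Ms ! k) y w - (dbc ! k + snd db ! k + dab ! k) \<and>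
      int p dvd qf n (Ms ! k) y ha \<and> int p dvd 2 * qf n (Ms ! k) y hb + qf n (Ms ! k) hb hb \<and> int p dvd qf n (Ms ! k) y hc)"
proof -
  let ?l = "length Ls"
  have L: "(\<forall>j<?l. int p dvd (\<Sum>i<n. (vsL ! j) i * y i) + by2 j) \<longleftrightarrow> LLd p n Ls y db"
    unfolding LLd_def lf_def by (simp add: vsL_L by2_def)
  have Q: "(int p dvd (\<Sum>i<n. (vsL ! (?l + 4 * k + s)) i * y i) + by2 (?l + 4 * k + s)) \<longleftrightarrow>
     (if s = 0 then int p dvd qf n (Ms ! k) y w - (dbc ! k + snd db ! k + dab ! k)
      else if s = 1 then int p dvd qf n (Ms ! k) y ha
      else if s = 2 then int p dvd 2 * qf n (Ms ! k) y hb + qf n (Ms ! k) hb hb else int p dvd qf n (Ms ! k) y hc)"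
    if k: "k < length Ms" and s: "s < 4" for k s
  proof -
    have b: "by2 (?l + 4 * k + s) = (if s = 0 then - (dbc ! k + snd db ! k + dab ! k) else if s = 2 then tt * qf n (Ms ! k) hb hb else 0)"
    proof -
      have e1: "\<not> (?l + 4 * k + s < ?l)" by simp
      have e2: "?l + 4 * k + s - ?l = 4 * k + s" by simp
      have d: "(4 * k + s) div 4 = k" "(4 * k + s) mod 4 = s" using s by auto
      show ?thesis by (simp only: by2_def Let_def e1 e2 d if_False)
    qed
    have s4: "s = 0 \<or> s = 1 \<or> s = 2 \<or> s = 3" using s by linarith
    have m: "\<And>v c. int p dvd (\<Sum>i<n. mvec p n (Ms ! k) v i * y i) + c \<longleftrightarrow> int p dvd qf n (Ms ! k) y v + c"
      by (rule dvd_add_mod[OF mvec_sum])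
    from s4 show ?thesis
    proof (elim disjE)
      assume s0: "s = 0"
      show ?thesis unfolding vsL_Q[OF k s] b using s0 m[of w "- (dbc ! k + snd db ! k + dab ! k)"] by (simp add: algebra_simps)
    next
      assume s1: "s = 1"
      show ?thesis unfolding vsL_Q[OF k s] b using s1 m[of ha "0"] by simp
    next
      assume s2: "s = 2"
      show ?thesis unfolding vsL_Q[OF k s] b using s2 m[of hb "tt * qf n (Ms ! k) hb hb"] t_iff by simp
    next
      assume s3: "s = 3"
      show ?thesis unfolding vsL_Q[OF k s] b using s3 m[of hc "0"] by simp
    qed
  qed
  have "(\<forall>j<length vsL. int p dvd (\<Sum>i<n. (vsL ! j) i * y i) + by2 j) \<longleftrightarrow>
     (\<forall>j<?l. int p dvd (\<Sum>i<n. (vsL ! j) i * y i) + by2 j) \<and>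
     (\<forall>k<length Ms. (int p dvd (\<Sum>i<n. (vsL ! (?l + 4 * k)) i * y i) + by2 (?l + 4 * k)) \<and>
        (int p dvd (\<Sum>i<n. (vsL ! (?l + 4 * k + 1)) i * y i) + by2 (?l + 4 * k + 1)) \<and>
        (int p dvd (\<Sum>i<n. (vsL ! (?l + 4 * k + 2)) i * y i) + by2 (?l + 4 * k + 2)) \<and>
        (int p dvd (\<Sum>i<n. (vsL ! (?l + 4 * k + 3)) i * y i) + by2 (?l + 4 * k + 3)))"
    unfolding vsL_len by (rule all_split4)
  also have "\<dots> \<longleftrightarrow> LLd p n Ls y db \<and> (\<forall>k<length Ms. int p dvd qf n (Ms ! k) y w - (dbc ! k + snd db ! k + dab ! k) \<and>
      int p dvd qf n (Ms ! k) y ha \<and> int p dvd 2 * qf n (Ms ! k) y hb + qf n (Ms ! k) hb hb \<and> int p dvd qf n (Ms ! k) y hc)"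
    unfolding L using Q[of _ 0] Q[of _ 1] Q[of _ 2] Q[of _ 3] by simp
  finally show ?thesis .
qed

end


lemma bil_dvd: "int p dvd bil p n M x y - a \<longleftrightarrow> int p dvd qf n M x y - a"
  unfolding bil_qf by (rule dvd_mod_iff) simp

lemma qrank_rk:
  assumes "p \<ge> 2"
  shows "\<forall>l\<in>vecs p (length Ms). l \<noteq> vzero \<longrightarrow> qrank p n Ms \<le> mrank p n (mlincomb p n l Ms)"
proof (cases "Ms = []")
  case True
  thus ?thesis by (simp add: vecs_0)
next
  case False
  let ?S = "{mrank p n (mlincomb p n lam Ms) | lam.
            (\<forall>k<length Ms. lam k \<in> Fp p) \<and> (\<forall>k\<ge>length Ms. lam k = 0) \<and> (\<exists>k<length Ms. lam k \<noteq> 0)}"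
  have sub: "?S \<subseteq> {..n}"
  proof
    fix m assume "m \<in> ?S"
    then obtain lam where "m = mrank p n (mlincomb p n lam Ms)" by blast
    thus "m \<in> {..n}" using mrank_le[OF assms] by simp
  qed
  have fin: "finite ?S" by (rule finite_subset[OF sub]) simp
  show ?thesis
  proof (intro ballI impI)
    fix l assume l: "l \<in> vecs p (length Ms)" "l \<noteq> vzero"
    have "\<exists>k<length Ms. l k \<noteq> 0"
    proof (rule ccontr)
      assume "\<not> (\<exists>k<length Ms. l k \<noteq> 0)"
      hence z: "\<forall>k<length Ms. l k = 0" by blast
      have "l = vzero"
      proof
        fix k show "l k = vzero k"
          using l(1) z unfolding vecs_def vzero_def by (cases "k < length Ms") auto
      qed
      thus False using l(2) by simp
    qed
    hence "(\<forall>k<length Ms. l k \<in> Fp p) \<and> (\<forall>k\<ge>length Ms. l k = 0) \<and> (\<exists>k<length Ms. l k \<noteq> 0)"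
      using l(1) unfolding vecs_def by auto
    hence "mrank p n (mlincomb p n l Ms) \<in> ?S" by blast
    hence "Min ?S \<le> mrank p n (mlincomb p n l Ms)" using fin by (rule Min_le[rotated])
    thus "qrank p n Ms \<le> mrank p n (mlincomb p n l Ms)" unfolding qrank_def using False by simp
  qed
qed

context setting
begin

abbreviation "Nset \<equiv> {t. Psi p t = (w, ha, hb, hc)} \<inter> K222 p n Ls Ms (da, db, dc, dab, dac, dbc)"

lemma red2_split:
  "red2 x y \<longleftrightarrow> (\<forall>j<length vsL. int p dvd (\<Sum>i<n. (vsL ! j) i * x i) + bx2 j) \<and>
     (\<forall>j<length vsL. int p dvd (\<Sum>i<n. (vsL ! j) i * y i) + by2 j) \<and>
     (\<forall>k<length Ms. int p dvd bil p n (Ms ! k) x x - snd da ! k \<and> int p dvd bil p n (Ms ! k) y y - snd db ! k \<and>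
         int p dvd bil p n (Ms ! k) x y - dab ! k)"
  unfolding X2_char Y2_char red2_def bil_dvd
  by (simp only: imp_conjR all_conj_distrib conj_ac)

lemma red2_red1:
  "red2 x y \<Longrightarrow> (\<forall>j<length Ls. int p dvd (\<Sum>i<n. (Ls ! j) i * x i) + - (fst da ! j)) \<and>
     (\<forall>j<length Ls. int p dvd (\<Sum>i<n. (Ls ! j) i * y i) + - (fst db ! j)) \<and>
     (\<forall>k<length Ms. int p dvd bil p n (Ms ! k) x x - snd da ! k \<and> int p dvd bil p n (Ms ! k) y y - snd db ! k \<and>
         int p dvd bil p n (Ms ! k) x y - dab ! k)"
  unfolding red2_def bil_dvd LLd_def lf_def by simp

lemma N_eq:
  "card Nset = card {z \<in> {x\<in>vecs p n. \<forall>j<length vsL. int p dvd (\<Sum>i<n. (vsL ! j) i * x i) + bx2 j} \<times>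
       {y\<in>vecs p n. \<forall>j<length vsL. int p dvd (\<Sum>i<n. (vsL ! j) i * y i) + by2 j}.
     \<forall>k<length Ms. int p dvd bil p n (Ms ! k) (fst z) (fst z) - snd da ! k \<and>
       int p dvd bil p n (Ms ! k) (snd z) (snd z) - snd db ! k \<and> int p dvd bil p n (Ms ! k) (fst z) (snd z) - dab ! k}"
  unfolding S_card
proof (rule arg_cong[where f=card], rule set_eqI)
  fix z :: "(nat \<Rightarrow> int) \<times> (nat \<Rightarrow> int)"
  obtain x y where z: "z = (x, y)" by force
  show "z \<in> {z \<in> vecs p n \<times> vecs p n. red2 (fst z) (snd z)} \<longleftrightarrow> z \<in> {z \<in> {x\<in>vecs p n. \<forall>j<length vsL. int p dvd (\<Sum>i<n. (vsL ! j) i * x i) + bx2 j} \<times>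
       {y\<in>vecs p n. \<forall>j<length vsL. int p dvd (\<Sum>i<n. (vsL ! j) i * y i) + by2 j}.
     \<forall>k<length Ms. int p dvd bil p n (Ms ! k) (fst z) (fst z) - snd da ! k \<and>
       int p dvd bil p n (Ms ! k) (snd z) (snd z) - snd db ! k \<and> int p dvd bil p n (Ms ! k) (fst z) (snd z) - dab ! k}"
    unfolding z by (simp only: mem_Collect_eq mem_Sigma_iff fst_conv snd_conv red2_split conj_ac)
qed

lemma N_le:
  "card Nset \<le> card {z \<in> {x\<in>vecs p n. \<forall>j<length Ls. int p dvd (\<Sum>i<n. (Ls ! j) i * x i) + - (fst da ! j)} \<times>
       {y\<in>vecs p n. \<forall>j<length Ls. int p dvd (\<Sum>i<n. (Ls ! j) i * y i) + - (fst db ! j)}.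
     \<forall>k<length Ms. int p dvd bil p n (Ms ! k) (fst z) (fst z) - snd da ! k \<and>
       int p dvd bil p n (Ms ! k) (snd z) (snd z) - snd db ! k \<and> int p dvd bil p n (Ms ! k) (fst z) (snd z) - dab ! k}"
  unfolding S_card
proof (rule card_mono)
  show "finite {z \<in> {x\<in>vecs p n. \<forall>j<length Ls. int p dvd (\<Sum>i<n. (Ls ! j) i * x i) + - (fst da ! j)} \<times>
       {y\<in>vecs p n. \<forall>j<length Ls. int p dvd (\<Sum>i<n. (Ls ! j) i * y i) + - (fst db ! j)}.
     \<forall>k<length Ms. int p dvd bil p n (Ms ! k) (fst z) (fst z) - snd da ! k \<and>
       int p dvd bil p n (Ms ! k) (snd z) (snd z) - snd db ! k \<and> int p dvd bil p n (Ms ! k) (fst z) (snd z) - dab ! k}"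
    by (rule finite_subset[OF _ finite_cartesian_product[OF finite_vecs finite_vecs]]) blast
  show "{z \<in> vecs p n \<times> vecs p n. red2 (fst z) (snd z)} \<subseteq> {z \<in> {x\<in>vecs p n. \<forall>j<length Ls. int p dvd (\<Sum>i<n. (Ls ! j) i * x i) + - (fst da ! j)} \<times>
       {y\<in>vecs p n. \<forall>j<length Ls. int p dvd (\<Sum>i<n. (Ls ! j) i * y i) + - (fst db ! j)}.
     \<forall>k<length Ms. int p dvd bil p n (Ms ! k) (fst z) (fst z) - snd da ! k \<and>
       int p dvd bil p n (Ms ! k) (snd z) (snd z) - snd db ! k \<and> int p dvd bil p n (Ms ! k) (fst z) (snd z) - dab ! k}"
  proof
    fix z assume "z \<in> {z \<in> vecs p n \<times> vecs p n. red2 (fst z) (snd z)}"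
    then obtain x y where z: "z = (x, y)" "x \<in> vecs p n" "y \<in> vecs p n" "red2 x y" by auto
    note r = red2_red1[OF z(4)]
    show "z \<in> {z \<in> {x\<in>vecs p n. \<forall>j<length Ls. int p dvd (\<Sum>i<n. (Ls ! j) i * x i) + - (fst da ! j)} \<times>
       {y\<in>vecs p n. \<forall>j<length Ls. int p dvd (\<Sum>i<n. (Ls ! j) i * y i) + - (fst db ! j)}.
     \<forall>k<length Ms. int p dvd bil p n (Ms ! k) (fst z) (fst z) - snd da ! k \<and>
       int p dvd bil p n (Ms ! k) (snd z) (snd z) - snd db ! k \<and> int p dvd bil p n (Ms ! k) (fst z) (snd z) - dab ! k}"
      unfolding z(1) using z(2,3) r by (simp only: mem_Collect_eq mem_Sigma_iff fst_conv snd_conv simp_thms conj_assoc)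
  qed
qed

end


lemma ratio:
  fixes P cX cY :: real and nx l m :: nat
  assumes P: "P > 0" and X: "cX * P ^ l = P ^ nx" and Y: "cY * P ^ l = P ^ nx"
  shows "cX * cY / P ^ m = P powr (2 * real nx - 2 * real l - real m)"
proof -
  have cX: "cX = P ^ nx / P ^ l" using X P by (simp add: field_simps)
  have cY: "cY = P ^ nx / P ^ l" using Y P by (simp add: field_simps)
  have "cX * cY / P ^ m = P ^ nx * P ^ nx / (P ^ l * P ^ l * P ^ m)" unfolding cX cY by simp
  also have "\<dots> = P powr (real nx + real nx) / P powr (real l + real l + real m)"
    by (simp only: powr_add powr_realpow[OF P])
  also have "\<dots> = P powr ((real nx + real nx) - (real l + real l + real m))"
    by (rule powr_diff[symmetric])
  also have "(real nx + real nx) - (real l + real l + real m) = 2 * real nx - 2 * real l - real m" by simp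
  finally show ?thesis .
qed

context setting
begin

lemma symMs: "\<forall>M\<in>set Ms. is_sym M" using qfac unfolding quad_factor_def by blast

lemma claim1:
  assumes lf: "linear_factor p n Ls"
  shows "real (card Nset) \<le> real p powr (2 * real n - 2 * real (length Ls) - real (3 * length Ms))
            + real p powr (2 * real n - real (qrank p n Ms) / 2)"
proof -
  have li: "lin_indep p n Ls" using lf unfolding linear_factor_def by blast
  note cm = count_main[OF prime odd symMs qrank_rk[OF p2, where n=n], where ax = "\<lambda>j i. (Ls ! j) i" and bx = "\<lambda>j. - fst da ! j"
      and kx = "length Ls" and ay = "\<lambda>j i. (Ls ! j) i" and byy = "\<lambda>j. - fst db ! j" and ky = "length Ls"
      and a = "\<lambda>k. snd da ! k" and b = "\<lambda>k. snd db ! k" and c = "\<lambda>k. dab ! k"]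
  have cx: "card {x\<in>vecs p n. \<forall>j<length Ls. int p dvd (\<Sum>i<n. (Ls ! j) i * x i) + - fst da ! j} * p ^ length Ls = p ^ n"
    by (rule lin_count[OF p0 li])
  have cy: "card {x\<in>vecs p n. \<forall>j<length Ls. int p dvd (\<Sum>i<n. (Ls ! j) i * x i) + - fst db ! j} * p ^ length Ls = p ^ n"
    by (rule lin_count[OF p0 li])
  have rt: "real (card {x\<in>vecs p n. \<forall>j<length Ls. int p dvd (\<Sum>i<n. (Ls ! j) i * x i) + - fst da ! j}) *
            real (card {x\<in>vecs p n. \<forall>j<length Ls. int p dvd (\<Sum>i<n. (Ls ! j) i * x i) + - fst db ! j}) / real p ^ (3 * length Ms)
        = real p powr (2 * real n - 2 * real (length Ls) - real (3 * length Ms))"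
    by (rule ratio) (use p0 cx cy in \<open>simp_all flip: of_nat_mult of_nat_power\<close>)
  have "real (card Nset) \<le> real (card {z \<in> {x\<in>vecs p n. \<forall>j<length Ls. int p dvd (\<Sum>i<n. (Ls ! j) i * x i) + - (fst da ! j)} \<times>
       {y\<in>vecs p n. \<forall>j<length Ls. int p dvd (\<Sum>i<n. (Ls ! j) i * y i) + - (fst db ! j)}.
     \<forall>k<length Ms. int p dvd bil p n (Ms ! k) (fst z) (fst z) - snd da ! k \<and>
       int p dvd bil p n (Ms ! k) (snd z) (snd z) - snd db ! k \<and> int p dvd bil p n (Ms ! k) (fst z) (snd z) - dab ! k})"
    using N_le by simp
  also have "\<dots> \<le> real p powr (2 * real n - 2 * real (length Ls) - real (3 * length Ms))
            + real p powr (2 * real n - real (qrank p n Ms) / 2)"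
    using cm rt by (simp add: abs_le_iff)
  finally show ?thesis .
qed

lemma claim2:
  assumes li: "lin_indep p n vsL"
  shows "\<bar>real (card Nset) - real p powr (2 * real n - 2 * real (length Ls) - real (11 * length Ms))\<bar>
            \<le> real p powr (2 * real n - real (qrank p n Ms) / 2)"
proof -
  note cm = count_main[OF prime odd symMs qrank_rk[OF p2, where n=n], where ax = "\<lambda>j i. (vsL ! j) i" and bx = bx2
      and kx = "length vsL" and ay = "\<lambda>j i. (vsL ! j) i" and byy = by2 and ky = "length vsL"
      and a = "\<lambda>k. snd da ! k" and b = "\<lambda>k. snd db ! k" and c = "\<lambda>k. dab ! k"]
  have cx: "card {x\<in>vecs p n. \<forall>j<length vsL. int p dvd (\<Sum>i<n. (vsL ! j) i * x i) + bx2 j} * p ^ length vsL = p ^ n"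
    by (rule lin_count[OF p0 li])
  have cy: "card {x\<in>vecs p n. \<forall>j<length vsL. int p dvd (\<Sum>i<n. (vsL ! j) i * x i) + by2 j} * p ^ length vsL = p ^ n"
    by (rule lin_count[OF p0 li])
  have rt: "real (card {x\<in>vecs p n. \<forall>j<length vsL. int p dvd (\<Sum>i<n. (vsL ! j) i * x i) + bx2 j}) *
            real (card {x\<in>vecs p n. \<forall>j<length vsL. int p dvd (\<Sum>i<n. (vsL ! j) i * x i) + by2 j}) / real p ^ (3 * length Ms)
        = real p powr (2 * real n - 2 * real (length vsL) - real (3 * length Ms))"
    by (rule ratio) (use p0 cx cy in \<open>simp_all flip: of_nat_mult of_nat_power\<close>)
  also have "2 * real n - 2 * real (length vsL) - real (3 * length Ms) = 2 * real n - 2 * real (length Ls) - real (11 * length Ms)"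
    unfolding vsL_len by simp
  finally have rt': "real (card {x\<in>vecs p n. \<forall>j<length vsL. int p dvd (\<Sum>i<n. (vsL ! j) i * x i) + bx2 j}) *
            real (card {x\<in>vecs p n. \<forall>j<length vsL. int p dvd (\<Sum>i<n. (vsL ! j) i * x i) + by2 j}) / real p ^ (3 * length Ms)
        = real p powr (2 * real n - 2 * real (length Ls) - real (11 * length Ms))" .
  show ?thesis using cm unfolding N_eq rt' .
qed

end


lemma powi_powr: "(x::real) > 0 \<Longrightarrow> x powi m = x powr (real_of_int m)"
  by (simp add: power_int_def powr_real_of_int power_inverse)

lemma main_core:
  fixes p n :: nat and \<epsilon> :: real and Ls :: "(nat \<Rightarrow> int) list" and Ms :: "(nat \<Rightarrow> nat \<Rightarrow> int) list"
    and da db dc e :: "int list \<times> int list" and dab dac dbc :: "int list" and w ha hb hc :: "nat \<Rightarrow> int"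
  assumes pr: "prime p" and od: "odd p" and e0: "0 < \<epsilon>" and e1: "\<epsilon> < 1"
    and lf: "linear_factor p n Ls" and qfac: "quad_factor p n Ms"
    and rk: "real (qrank p n Ms) \<ge> 22 * (real (length Ls) + real (length Ms) + log (real p) (1 / \<epsilon>))"
    and f1: "fvec p (length Ls) (fst e)" and f2: "fvec p (length Ms) (snd e)"
    and f3: "fvec p (length Ls) (fst da)" and f4: "fvec p (length Ms) (snd da)"
    and f5: "fvec p (length Ls) (fst db)" and f6: "fvec p (length Ms) (snd db)"
    and f7: "fvec p (length Ls) (fst dc)" and f8: "fvec p (length Ms) (snd dc)"
    and f9: "fvec p (length Ms) dab" and f10: "fvec p (length Ms) dac" and f11: "fvec p (length Ms) dbc"
    and sg: "Sigma_d p (length Ls) (da, db, dc, dab, dac, dbc) = e"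
    and om: "(w, ha, hb, hc) \<in> Omega p n (atom p n Ls Ms e)"
  shows "let N = real (card ({t. Psi p t = (w, ha, hb, hc)} \<inter> K222 p n Ls Ms (da, db, dc, dab, dac, dbc)));
           l = int (length Ls); q = int (length Ms) in
        N \<le> (1 + \<epsilon>) * real p powi (2 * int n - 2 * l - 3 * q) \<and>
        (lin_indep p n (Ls @ concat (map (\<lambda>M. [mvec p n M w, mvec p n M ha, mvec p n M hb, mvec p n M hc]) Ms))
          \<longrightarrow> \<bar>N - real p powi (2 * int n - 2 * l - 11 * q)\<bar> \<le> \<epsilon> * real p powi (2 * int n - 2 * l - 11 * q))"
proof -
  interpret S: setting p n Ls Ms da db dc e dab dac dbc w ha hb hc
    by unfold_locales (rule pr od qfac f1 f2 f3 f4 f5 f6 f7 f8 f9 f10 f11 sg om)+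
  define P where "P = real p"
  define L where "L = log P (1 / \<epsilon>)"
  define r where "r = real (qrank p n Ms)"
  define l where "l = real (length Ls)"
  define q where "q = real (length Ms)"
  define E where "E = P powr (2 * real n - r / 2)"
  define a3 where "a3 = 2 * real n - 2 * l - 3 * q"
  define a11 where "a11 = 2 * real n - 2 * l - 11 * q"
  have P1: "P > 1" unfolding P_def using S.p2 by simp
  have P0: "P > 0" using P1 by simp
  have L0: "L > 0" unfolding L_def using P1 e0 e1 by simp
  have eps: "\<epsilon> = P powr (- L)"
  proof -
    have "P powr L = 1 / \<epsilon>" unfolding L_def using P1 e0 by simp
    thus ?thesis by (simp add: powr_minus)
  qed
  have r22: "r \<ge> 22 * (l + q + L)" using rk unfolding r_def l_def q_def L_def P_def by simp
  have l0: "l \<ge> 0" "q \<ge> 0" unfolding l_def q_def by simp_all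
  have Eb: "E \<le> \<epsilon> * P powr a11"
  proof -
    have "\<epsilon> * P powr a11 = P powr (a11 - L)" unfolding eps by (simp add: powr_add[symmetric])
    moreover have "E \<le> P powr (a11 - L)" unfolding E_def
      by (rule powr_mono) (use r22 l0 L0 P1 in \<open>simp_all add: a11_def\<close>)
    ultimately show ?thesis by simp
  qed
  have mono: "P powr a11 \<le> P powr a3"
    by (rule powr_mono) (use l0 P1 in \<open>simp_all add: a11_def a3_def\<close>)
  have c1: "real (card S.Nset) \<le> P powr a3 + E"
    using S.claim1[OF lf] unfolding P_def a3_def E_def r_def l_def q_def by simp
  have pw3: "real p powi (2 * int n - 2 * int (length Ls) - 3 * int (length Ms)) = P powr a3"
    unfolding P_def a3_def l_def q_def using P0 unfolding P_def by (simp add: powi_powr)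
  have pw11: "real p powi (2 * int n - 2 * int (length Ls) - 11 * int (length Ms)) = P powr a11"
    unfolding P_def a11_def l_def q_def using P0 unfolding P_def by (simp add: powi_powr)
  have A: "real (card S.Nset) \<le> (1 + \<epsilon>) * P powr a3"
  proof -
    have "real (card S.Nset) \<le> P powr a3 + \<epsilon> * P powr a11" using c1 Eb by simp
    also have "\<dots> \<le> P powr a3 + \<epsilon> * P powr a3" using mono e0 by simp
    finally show ?thesis by (simp add: algebra_simps)
  qed
  have B: "\<bar>real (card S.Nset) - P powr a11\<bar> \<le> \<epsilon> * P powr a11"
    if li: "lin_indep p n (Ls @ concat (map (\<lambda>M. [mvec p n M w, mvec p n M ha, mvec p n M hb, mvec p n M hc]) Ms))"
  proof -
    have "lin_indep p n S.vsL" using li unfolding S.vsL_def .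
    hence "\<bar>real (card S.Nset) - P powr a11\<bar> \<le> E"
      using S.claim2 unfolding P_def a11_def E_def r_def l_def q_def by simp
    thus ?thesis using Eb by simp
  qed
  show ?thesis unfolding Let_def pw3 pw11 using A B by simp
qed

theorem mainTheorem11:
  shows "\<exists>C::real. C > 0 \<and>
   (\<forall>(p::nat) (n::nat) (\<epsilon>::real) Ls Ms da db dc dab dac dbc e w ha hb hc.
      prime p \<and> odd p \<and> 0 < \<epsilon> \<and> \<epsilon> < 1 \<and>
      linear_factor p n Ls \<and> quad_factor p n Ms \<and>
      real (qrank p n Ms) \<ge> C * (real (length Ls) + real (length Ms) + log (real p) (1 / \<epsilon>)) \<and>
      fvec p (length Ls) (fst e) \<and> fvec p (length Ms) (snd e) \<and>
      fvec p (length Ls) (fst da) \<and> fvec p (length Ms) (snd da) \<and>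
      fvec p (length Ls) (fst db) \<and> fvec p (length Ms) (snd db) \<and>
      fvec p (length Ls) (fst dc) \<and> fvec p (length Ms) (snd dc) \<and>
      fvec p (length Ms) dab \<and> fvec p (length Ms) dac \<and> fvec p (length Ms) dbc \<and>
      Sigma_d p (length Ls) (da, db, dc, dab, dac, dbc) = e \<and>
      (w, ha, hb, hc) \<in> Omega p n (atom p n Ls Ms e)
    \<longrightarrow>
      (let N = real (card ({t. Psi p t = (w, ha, hb, hc)} \<inter> K222 p n Ls Ms (da, db, dc, dab, dac, dbc)));
           l = int (length Ls); q = int (length Ms) in
        N \<le> (1 + \<epsilon>) * real p powi (2 * int n - 2 * l - 3 * q) \<and>
        (lin_indep p n (Ls @ concat (map (\<lambda>M. [mvec p n M w, mvec p n M ha, mvec p n M hb, mvec p n M hc]) Ms))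
          \<longrightarrow> \<bar>N - real p powi (2 * int n - 2 * l - 11 * q)\<bar> \<le> \<epsilon> * real p powi (2 * int n - 2 * l - 11 * q))))"
  apply (rule exI[of _ 22])
  apply (intro conjI allI impI)
   apply simp
  apply (elim conjE)
  apply (rule main_core)
                      apply assumption+
  done


end
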